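(* Let $p\neq q$ be primes and $N=N_p\times N_q$ with $N_p\cong C_p\times C_p$ and $N_q\cong C_q\times C_q$. Let $K_p\le T_p\le\mathrm{Aut}(N_p)$ and $K_q\le T_q\le\mathrm{Aut}(N_q)$ with $T_p,T_q$ abelian, and let $f_p\in\mathcal{E}(\mathrm{Aut}(N_p),K_p,N_p)$, $f_q\in\mathcal{E}(\mathrm{Aut}(N_q),K_q,N_q)$. Assume: (1) there is $n=n_pn_q\in N$ ($n_p\in N_p$, $n_q\in N_q$) with $f_p(n_p)=f_q(n_q)\neq0$; (2) $f_p$ vanishes outside $n_p^{T_p}$ and $f_q$ vanishes outside $n_q^{T_q}$; (3) there is an isomorphism $\alpha:T_p/K_p\to T_q/K_q$ such that $f_p(n_p^{a})=f_q(n_q^{b})$ for every $a\in T_p$ and every $b\in T_q$ with $bK_q=\alpha(a^{-1}K_p)$. Regard $T_p\times T_q\le\mathrm{Aut}(N)$, let $r_p:T_p\times T_q\to T_p$, $r_q:T_p\times T_q\to T_q$ be the projections, $\pi_p:T_p\to T_p/K_p$, $\pi_q:T_q\to T_q/K_q$ the quotient maps, $\Gamma=\{\sigma\in T_p\times T_q:\alpha\pi_pr_p(\sigma)=\pi_qr_q(\sigma)\}$ and $G=N\rtimes\Gamma$, acting on $N$ by conjugation. Define $\varepsilon:N\to\mathbb{Z}$ by $\varepsilon(x)=0$ if $x_q\notin n_q^G$ and $\varepsilon(x)=f_p(x_p^g)$ if $n_q=x_q^g$ with $g\in G$. Then $\varepsilon$ is well defined, $f_p\in\mathcal{E}(G,\mathrm{C}_G(n_q),N_p)$,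 $f_q\in\mathcal{E}(G,\mathrm{C}_G(n_p),N_q)$, and also $\varepsilon(x)=0$ if $x_p\notin n_p^G$ and $\varepsilon(x)=f_q(x_q^g)$ if $n_p=x_p^g$ with $g\in G$.
   Context: $x_p,x_q$ denote the $p$-part and $q$-part of $x\in N$; $x^S$ the orbit of $x$ under a group $S$; $\mathrm{C}_G(y)$ the centralizer. Definition of $\mathcal{E}(G,H,A)$ (for a group $G$ acting on a finite abelian group $A$ and $H\le G$): the set of functions $f:A\to\mathbb{Z}$ constant on $H$-orbits such that (I) $\sum_{X\in\mathrm{Cl}_H(A)}f(X)=1$, where $\mathrm{Cl}_H(A)$ is the set of $H$-orbits; (II) $f$ vanishes outside a single local $G$-class of $A$ ($a,b$ locally $G$-conjugate iff $a_r,b_r$ are $G$-conjugate for every prime $r$); (III) $\sum_{c\in C}|\mathrm{C}_H(c)|f(c)\ge0$ for every coset $C$ of a minimal cocyclic subgroup of $A$ (a subgroup $L$ with $A/L$ cyclic, minimal with this property); (IV) $f(a)\ge -h_A[\mathrm{C}_H(a_{\pi_0}):\mathrm{C}_H(a)]$ for all $a$, where $\pi_0$ is the set of primes $r$ dividing $|A|$ with $A_r$ cyclic and $h_A=\frac{\sum_{X\in\pi^-}\prod_{r\in\pi}(r^{k_r-\Delta_X(r)}-1)}{\prod_{r\in\pi}(r-1)r^{k_r-1}}$ with $\pi$ the primes dividing $|A|$, $\pi^-$ the odd-cardinality subsets of $\pi$, $\Delta_X$ the characteristic function of $X$, $k_r$ the rank of the socle of $A_r$; (V) $f(a)<0$ for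 some $a$. Here $\mathrm{C}_H(c)$ is the stabilizer of $c$ in $H$. *)

theory Defs
  imports Complex_Main "HOL-Algebra.Algebra"
begin

definition pi_elem :: "('a, 'b) monoid_scheme \<Rightarrow> nat set \<Rightarrow> 'a \<Rightarrow> bool" where
  "pi_elem A P y \<longleftrightarrow> (\<exists>m::nat. m > 0 \<and> (\<forall>q. Factorial_Ring.prime q \<longrightarrow> q dvd m \<longrightarrow> q \<in> P)
                         \<and> y [^]\<^bsub>A\<^esub> m = \<one>\<^bsub>A\<^esub>)"

definition pi_part :: "('a, 'b) monoid_scheme \<Rightarrow> nat set \<Rightarrow> 'a \<Rightarrow> 'a" where
  "pi_part A P a = (THE y. y \<in> carrier A \<and> pi_elem A P y \<and>
       (\<exists>z \<in> carrier A. pi_elem A (- P) z \<and> a = y \<otimes>\<^bsub>A\<^esub> z))"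

definition sylow_part :: "('a, 'b) monoid_scheme \<Rightarrow> nat \<Rightarrow> 'a set" where
  "sylow_part A r = {a \<in> carrier A. pi_elem A {r} a}"

definition socle_rank :: "('a, 'b) monoid_scheme \<Rightarrow> nat \<Rightarrow> nat" where
  "socle_rank A r = (THE k. card {a \<in> carrier A. a [^]\<^bsub>A\<^esub> r = \<one>\<^bsub>A\<^esub>} = r ^ k)"

definition primes_of :: "('a, 'b) monoid_scheme \<Rightarrow> nat set" where
  "primes_of A = {r. Factorial_Ring.prime r \<and> r dvd card (carrier A)}"

definition pi0 :: "('a, 'b) monoid_scheme \<Rightarrow> nat set" where
  "pi0 A = {r \<in> primes_of A. cyclic_group (A\<lparr>carrier := sylow_part A r\<rparr>)}"

definition hA :: "('a, 'b) monoid_scheme \<Rightarrow> real" where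
  "hA A = (\<Sum>S \<in> {S. S \<subseteq> primes_of A \<and> odd (card S)}.
             \<Prod>r \<in> primes_of A. (real r ^ (socle_rank A r - (if r \<in> S then 1 else 0)) - 1))
          / (\<Prod>r \<in> primes_of A. (real r - 1) * real r ^ (socle_rank A r - 1))"

definition min_cocyclic :: "('a, 'b) monoid_scheme \<Rightarrow> 'a set \<Rightarrow> bool" where
  "min_cocyclic A L \<longleftrightarrow> subgroup L A \<and> cyclic_group (A Mod L) \<and>
     \<not> (\<exists>L'. subgroup L' A \<and> cyclic_group (A Mod L') \<and> L' \<subset> L)"

text \<open>An action is given by a map act with act a g = a^g.\<close>
definition orbit_in :: "('a \<Rightarrow> 'g \<Rightarrow> 'a) \<Rightarrow> 'g set \<Rightarrow> 'a \<Rightarrow> 'a set" where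
  "orbit_in act H a = {act a h | h. h \<in> H}"

definition stab_in :: "('a \<Rightarrow> 'g \<Rightarrow> 'a) \<Rightarrow> 'g set \<Rightarrow> 'a \<Rightarrow> 'g set" where
  "stab_in act H a = {h \<in> H. act a h = a}"

definition loc_conj :: "('g, 'c) monoid_scheme \<Rightarrow> ('a \<Rightarrow> 'g \<Rightarrow> 'a) \<Rightarrow> ('a, 'b) monoid_scheme
                        \<Rightarrow> 'a \<Rightarrow> 'a \<Rightarrow> bool" where
  "loc_conj G act A a b \<longleftrightarrow>
     (\<forall>r. Factorial_Ring.prime r \<longrightarrow> (\<exists>g \<in> carrier G. act (pi_part A {r} a) g = pi_part A {r} b))"

definition in_E :: "('g, 'c) monoid_scheme \<Rightarrow> ('a \<Rightarrow> 'g \<Rightarrow> 'a) \<Rightarrow> 'g set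
                     \<Rightarrow> ('a, 'b) monoid_scheme \<Rightarrow> ('a \<Rightarrow> int) \<Rightarrow> bool" where
  "in_E G act H A f \<longleftrightarrow>
     (\<forall>a \<in> carrier A. \<forall>h \<in> H. f (act a h) = f a) \<and>
     (\<Sum>Orb \<in> orbit_in act H ` carrier A. f (SOME x. x \<in> Orb)) = 1 \<and>
     (\<exists>c \<in> carrier A. \<forall>a \<in> carrier A. f a \<noteq> 0 \<longrightarrow> loc_conj G act A c a) \<and>
     (\<forall>L. min_cocyclic A L \<longrightarrow> (\<forall>C \<in> rcosets\<^bsub>A\<^esub> L.
          (\<Sum>c \<in> C. int (card (stab_in act H c)) * f c) \<ge> 0)) \<and>
     (\<forall>a \<in> carrier A. real_of_int (f a) \<ge>
          - hA A * (real (card (stab_in act H (pi_part A (pi0 A) a))) / real (card (stab_in act H a)))) \<and>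
     (\<exists>a \<in> carrier A. f a < 0)"

definition sdprod :: "('a, 'b) monoid_scheme \<Rightarrow> ('g, 'c) monoid_scheme \<Rightarrow> ('g \<Rightarrow> 'a \<Rightarrow> 'a)
                      \<Rightarrow> ('a \<times> 'g) monoid" where
  "sdprod N H phi = \<lparr>carrier = carrier N \<times> carrier H,
     monoid.mult = (\<lambda>(m, s) (m', s'). (m \<otimes>\<^bsub>N\<^esub> phi s m', s \<otimes>\<^bsub>H\<^esub> s')),
     one = (\<one>\<^bsub>N\<^esub>, \<one>\<^bsub>H\<^esub>)\<rparr>"

definition conj_sd :: "('a \<times> 'g) monoid \<Rightarrow> ('g, 'c) monoid_scheme \<Rightarrow> 'a \<Rightarrow> 'a \<times> 'g \<Rightarrow> 'a" where
  "conj_sd G H x g = fst (inv\<^bsub>G\<^esub> g \<otimes>\<^bsub>G\<^esub> (x, \<one>\<^bsub>H\<^esub>) \<otimes>\<^bsub>G\<^esub> g)"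

end

theory Submission
  imports Defs
begin


lemma pow_coprime_one:
  assumes "group A" "y \<in> carrier A" "y [^]\<^bsub>A\<^esub> (m::nat) = \<one>\<^bsub>A\<^esub>" "y [^]\<^bsub>A\<^esub> (p::nat) = \<one>\<^bsub>A\<^esub>" "coprime m p"
  shows "y = \<one>\<^bsub>A\<^esub>"
proof -
  interpret group A by fact
  have "group.ord A y dvd m" "group.ord A y dvd p" using pow_eq_id assms by auto
  hence "group.ord A y dvd gcd m p" by simp
  hence "group.ord A y = 1" using assms(5) by simp
  thus ?thesis using ord_eq_1 assms(2) by simp
qed

lemma pi_elem_one: "group A \<Longrightarrow> pi_elem A P \<one>\<^bsub>A\<^esub>"
  unfolding pi_elem_def
  by (rule exI[of _ 1]) (auto simp: not_prime_unit group.is_monoid)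

lemma pi_elem_p:
  assumes "Factorial_Ring.prime (p::nat)" "p \<in> P" "x [^]\<^bsub>A\<^esub> p = \<one>\<^bsub>A\<^esub>"
  shows "pi_elem A P x"
  unfolding pi_elem_def
proof (rule exI[of _ p], intro conjI allI impI)
  show "p > 0" using assms prime_gt_0_nat by blast
  fix q :: nat assume "Factorial_Ring.prime q" "q dvd p"
  hence "q = p" using assms(1) primes_dvd_imp_eq by blast
  thus "q \<in> P" using assms by simp
qed (use assms in auto)

lemma pi_elem_coprime:
  assumes "group A" "Factorial_Ring.prime (p::nat)" "p \<notin> P" "pi_elem A P y" "y \<in> carrier A"
     "y [^]\<^bsub>A\<^esub> p = \<one>\<^bsub>A\<^esub>"
  shows "y = \<one>\<^bsub>A\<^esub>"
proof -
  obtain m where m: "m > 0" "\<forall>q. Factorial_Ring.prime q \<longrightarrow> q dvd m \<longrightarrow> q \<in> P" "y [^]\<^bsub>A\<^esub> m = \<one>\<^bsub>A\<^esub>"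
    using assms(4) unfolding pi_elem_def by auto
  have "\<not> p dvd m" using m(2) assms(2,3) by blast
  hence "coprime p m" using assms(2) prime_imp_coprime by blast
  hence "coprime m p" by (simp add: coprime_commute)
  thus ?thesis using pow_coprime_one[OF assms(1) assms(5) m(3) assms(6)] by simp
qed

lemma pi_part_one:
  assumes "group A" "Factorial_Ring.prime (p::nat)" "\<forall>x\<in>carrier A. x [^]\<^bsub>A\<^esub> p = \<one>\<^bsub>A\<^esub>" "a \<in> carrier A" "p \<notin> P"
  shows "pi_part A P a = \<one>\<^bsub>A\<^esub>"
proof -
  interpret group A by fact
  show ?thesis unfolding pi_part_def
  proof (rule the_equality)
    show "\<one>\<^bsub>A\<^esub> \<in> carrier A \<and> pi_elem A P \<one>\<^bsub>A\<^esub> \<and> (\<exists>z\<in>carrier A. pi_elem A (- P) z \<and> a = \<one>\<^bsub>A\<^esub> \<otimes>\<^bsub>A\<^esub> z)"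
      using pi_elem_one[OF assms(1)] pi_elem_p[OF assms(2), of "-P" A a] assms by auto
    fix y assume "y \<in> carrier A \<and> pi_elem A P y \<and> (\<exists>z\<in>carrier A. pi_elem A (- P) z \<and> a = y \<otimes>\<^bsub>A\<^esub> z)"
    thus "y = \<one>\<^bsub>A\<^esub>" using pi_elem_coprime[OF assms(1,2,5)] assms(3) by blast
  qed
qed

lemma pi_part_self:
  assumes "group A" "Factorial_Ring.prime (p::nat)" "\<forall>x\<in>carrier A. x [^]\<^bsub>A\<^esub> p = \<one>\<^bsub>A\<^esub>" "a \<in> carrier A"
  shows "pi_part A {p} a = a"
proof -
  interpret group A by fact
  show ?thesis unfolding pi_part_def
  proof (rule the_equality)
    show "a \<in> carrier A \<and> pi_elem A {p} a \<and> (\<exists>z\<in>carrier A. pi_elem A (- {p}) z \<and> a = a \<otimes>\<^bsub>A\<^esub> z)"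
      using pi_elem_one[OF assms(1)] pi_elem_p[OF assms(2), of "{p}" A a] assms by (auto intro!: bexI[of _ "\<one>\<^bsub>A\<^esub>"])
    fix y assume "y \<in> carrier A \<and> pi_elem A {p} y \<and> (\<exists>z\<in>carrier A. pi_elem A (- {p}) z \<and> a = y \<otimes>\<^bsub>A\<^esub> z)"
    then obtain z where z: "y \<in> carrier A" "z \<in> carrier A" "pi_elem A (- {p}) z" "a = y \<otimes>\<^bsub>A\<^esub> z" by auto
    have "z = \<one>\<^bsub>A\<^esub>" using pi_elem_coprime[OF assms(1,2) _ z(3) z(2)] assms(3) z(2) by auto
    thus "y = a" using z by simp
  qed
qed


lemma not_cyclic_exp_p:
  assumes "group A" "Factorial_Ring.prime (p::nat)" "\<forall>x\<in>carrier A. x [^]\<^bsub>A\<^esub> p = \<one>\<^bsub>A\<^esub>"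
    "card (carrier A) = p * p"
  shows "\<not> cyclic_group A"
proof
  interpret group A by fact
  assume "cyclic_group A"
  then obtain x where x: "x \<in> carrier A" "carrier A = range (\<lambda>n::int. x [^]\<^bsub>A\<^esub> n)"
    using cyclic_group by auto
  have od: "ord x dvd p" using pow_eq_id x(1) assms(3) by auto
  have "carrier A \<subseteq> (\<lambda>n::int. x [^]\<^bsub>A\<^esub> n) ` {0..<int p}"
  proof
    fix y assume "y \<in> carrier A"
    then obtain n where n: "y = x [^]\<^bsub>A\<^esub> (n::int)" using x by auto
    have "int (ord x) dvd (n - n mod int p)"
    proof -
      have "int p dvd (n - n mod int p)" by (simp add: minus_mod_eq_mult_div)
      moreover have "int (ord x) dvd int p" using od by simp
      ultimately show ?thesis using dvd_trans by blast
    qed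
    hence "x [^]\<^bsub>A\<^esub> (n mod int p) = y" using int_pow_eq x(1) n by blast
    moreover have "n mod int p \<in> {0..<int p}" using assms(2) prime_gt_0_nat by auto
    ultimately show "y \<in> (\<lambda>n::int. x [^]\<^bsub>A\<^esub> n) ` {0..<int p}" by force
  qed
  hence "card (carrier A) \<le> card {0..<int p}"
    using card_image_le[of "{0..<int p}" "(\<lambda>n::int. x [^]\<^bsub>A\<^esub> n)"] card_mono[OF finite_imageI[OF finite_atLeastLessThan_int]] le_trans by blast
  hence "p * p \<le> p" using assms(4) by simp
  moreover have "p \<ge> 2" using assms(2) prime_ge_2_nat by blast
  moreover have "p * 2 \<le> p * p" using \<open>p \<ge> 2\<close> by (intro mult_le_mono2)
  ultimately show False by linarith
qed

lemma hA_nonneg: "hA A \<ge> 0"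
  unfolding hA_def
proof (rule divide_nonneg_nonneg)
  have pr: "\<And>r. r \<in> primes_of A \<Longrightarrow> real r \<ge> 1"
    unfolding primes_of_def using prime_ge_1_nat by auto
  show "0 \<le> (\<Sum>S\<in>{S. S \<subseteq> primes_of A \<and> odd (card S)}.
        \<Prod>r\<in>primes_of A. real r ^ (socle_rank A r - (if r \<in> S then 1 else 0)) - 1)"
    by (intro sum_nonneg prod_nonneg) (auto intro: one_le_power pr)
  show "0 \<le> (\<Prod>r\<in>primes_of A. (real r - 1) * real r ^ (socle_rank A r - 1))"
    using pr by (intro prod_nonneg) auto
qed


lemma carrier_AutoGroup: "carrier (AutoGroup A) = auto A"
  by (simp add: AutoGroup_def)

lemma mult_AutoGroup:
  "a \<in> auto A \<Longrightarrow> b \<in> auto A \<Longrightarrow> a \<otimes>\<^bsub>AutoGroup A\<^esub> b = compose (carrier A) a b"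
  by (simp add: AutoGroup_def BijGroup_def auto_def)

lemma mult_AutoGroup_apply:
  "a \<in> auto A \<Longrightarrow> b \<in> auto A \<Longrightarrow> x \<in> carrier A \<Longrightarrow> (a \<otimes>\<^bsub>AutoGroup A\<^esub> b) x = a (b x)"
  by (simp add: mult_AutoGroup compose_def)

lemma auto_closed: "t \<in> auto A \<Longrightarrow> x \<in> carrier A \<Longrightarrow> t x \<in> carrier A"
  unfolding auto_def hom_def by auto

lemma auto_inj: "t \<in> auto A \<Longrightarrow> inj_on t (carrier A)"
  unfolding auto_def Bij_def bij_betw_def by auto

lemma auto_Bij: "t \<in> auto A \<Longrightarrow> t \<in> Bij (carrier A)"
  unfolding auto_def by auto

lemma auto_one: "group A \<Longrightarrow> t \<in> auto A \<Longrightarrow> t \<one>\<^bsub>A\<^esub> = \<one>\<^bsub>A\<^esub>"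
  unfolding auto_def
  by (intro group_hom.hom_one group_hom.intro group_hom_axioms.intro) auto

lemma one_AutoGroup: "\<one>\<^bsub>AutoGroup A\<^esub> = (\<lambda>x\<in>carrier A. x)"
  by (simp add: AutoGroup_def BijGroup_def)

lemma inv_AutoGroup_apply:
  assumes "group A" "t \<in> auto A" "x \<in> carrier A"
  shows "(inv\<^bsub>AutoGroup A\<^esub> t) x \<in> carrier A" "t ((inv\<^bsub>AutoGroup A\<^esub> t) x) = x"
    "(inv\<^bsub>AutoGroup A\<^esub> t) (t x) = x"
proof -
  interpret Aut: group "AutoGroup A" using assms(1) group.AutoGroup by blast
  have t: "t \<in> carrier (AutoGroup A)" using assms(2) by (simp add: carrier_AutoGroup)
  have i: "inv\<^bsub>AutoGroup A\<^esub> t \<in> auto A" using Aut.inv_closed[OF t] by (simp add: carrier_AutoGroup)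
  show "(inv\<^bsub>AutoGroup A\<^esub> t) x \<in> carrier A" by (rule auto_closed[OF i assms(3)])
  have "t \<otimes>\<^bsub>AutoGroup A\<^esub> inv\<^bsub>AutoGroup A\<^esub> t = \<one>\<^bsub>AutoGroup A\<^esub>"
    using Aut.r_inv[OF t] .
  hence "(t \<otimes>\<^bsub>AutoGroup A\<^esub> inv\<^bsub>AutoGroup A\<^esub> t) x = x" using assms(3) by (simp only: one_AutoGroup restrict_apply' )
  thus "t ((inv\<^bsub>AutoGroup A\<^esub> t) x) = x" using mult_AutoGroup_apply[OF assms(2) i assms(3)] by simp
  have "inv\<^bsub>AutoGroup A\<^esub> t \<otimes>\<^bsub>AutoGroup A\<^esub> t = \<one>\<^bsub>AutoGroup A\<^esub>"
    using Aut.l_inv[OF t] .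
  hence "(inv\<^bsub>AutoGroup A\<^esub> t \<otimes>\<^bsub>AutoGroup A\<^esub> t) x = x" using assms(3) by (simp only: one_AutoGroup restrict_apply' )
  thus "(inv\<^bsub>AutoGroup A\<^esub> t) (t x) = x" using mult_AutoGroup_apply[OF i assms(2) assms(3)] by simp
qed

lemma finite_auto: "finite (carrier A) \<Longrightarrow> finite (auto A)"
proof -
  assume f: "finite (carrier A)"
  have "auto A \<subseteq> carrier A \<rightarrow>\<^sub>E carrier A"
    unfolding auto_def Bij_def PiE_def using bij_betw_imp_funcset by fastforce
  thus ?thesis using finite_PiE[OF f, of "\<lambda>_. carrier A"] f finite_subset by blast
qed

lemma (in group_action) orbit_sum_formula:
  fixes f :: "_ \<Rightarrow> int"
  assumes "finite (carrier G)" "finite E" "\<And>g x. g \<in> carrier G \<Longrightarrow> x \<in> E \<Longrightarrow> f (\<phi> g x) = f x"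
  shows "int (order G) * (\<Sum>Ob \<in> orbits G E \<phi>. f (SOME x. x \<in> Ob))
         = (\<Sum>x\<in>E. int (card (stabilizer G \<phi> x)) * f x)"
proof -
  have "(\<Sum>x\<in>E. int (card (stabilizer G \<phi> x)) * f x)
        = (\<Sum>Ob \<in> orbits G E \<phi>. \<Sum>x\<in>Ob. int (card (stabilizer G \<phi> x)) * f x)"
    using disjoint_sum[OF assms(2), of "\<lambda>x. int (card (stabilizer G \<phi> x)) * f x"] by simp
  also have "\<dots> = (\<Sum>Ob \<in> orbits G E \<phi>. int (order G) * f (SOME x. x \<in> Ob))"
  proof (rule sum.cong[OF refl])
    fix Ob assume Ob: "Ob \<in> orbits G E \<phi>"
    then obtain y where y: "y \<in> E" "Ob = orbit G \<phi> y" unfolding orbits_def by auto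
    have const: "\<And>x. x \<in> Ob \<Longrightarrow> f x = f y"
      using y assms(3) unfolding orbit_def by auto
    have "y \<in> Ob" using y orbit_refl by auto
    hence "(SOME x. x \<in> Ob) \<in> Ob" by (rule someI)
    hence fs: "f (SOME x. x \<in> Ob) = f y" using const by blast
    have "(\<Sum>x\<in>Ob. int (card (stabilizer G \<phi> x)) * f x) = (\<Sum>x\<in>Ob. int (card (stabilizer G \<phi> x))) * f y"
      by (simp add: const sum_distrib_right)
    also have "\<dots> = int (order G) * f y"
      using card_stablizer_sum[OF assms(1) Ob] by (metis of_nat_sum)
    finally show "(\<Sum>x\<in>Ob. int (card (stabilizer G \<phi> x)) * f x) = int (order G) * f (SOME x. x \<in> Ob)"
      using fs by simp
  qed
  also have "\<dots> = int (order G) * (\<Sum>Ob \<in> orbits G E \<phi>. f (SOME x. x \<in> Ob))"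
    by (simp add: sum_distrib_left)
  finally show ?thesis by simp
qed


lemma abstract_E:
  fixes A :: "'a monoid" and J :: "'g monoid" and act :: "'a \<Rightarrow> 'g \<Rightarrow> 'a" and f :: "'a \<Rightarrow> int"
  assumes grpA: "group A" and pr: "Factorial_Ring.prime p"
    and expp: "\<forall>x\<in>carrier A. x [^]\<^bsub>A\<^esub> p = \<one>\<^bsub>A\<^esub>" and cardA: "card (carrier A) = p * p"
    and T: "subgroup T (AutoGroup A)" "\<forall>a\<in>T. \<forall>b\<in>T. a \<otimes>\<^bsub>AutoGroup A\<^esub> b = b \<otimes>\<^bsub>AutoGroup A\<^esub> a"
    and K: "subgroup K (AutoGroup A)" "K \<subseteq> T"
    and fE: "in_E (AutoGroup A) (\<lambda>x a. a x) K A f"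
    and n0: "n0 \<in> carrier A"
    and van: "\<forall>x\<in>carrier A. x \<notin> orbit_in (\<lambda>x a. a x) T n0 \<longrightarrow> f x = 0"
    and J: "group J" "finite (carrier J)" and H: "subgroup H J"
    and act_T: "\<forall>g\<in>carrier J. \<exists>t\<in>T. \<forall>x\<in>carrier A. act x g = t x"
    and T_act: "\<forall>t\<in>T. \<exists>g\<in>carrier J. \<forall>x\<in>carrier A. act x g = t x"
    and K_act: "\<forall>k\<in>K. \<exists>h\<in>H. \<forall>x\<in>carrier A. act x h = k x"
    and act_mult: "\<forall>g\<in>carrier J. \<forall>h\<in>carrier J. \<forall>x\<in>carrier A. act x (g \<otimes>\<^bsub>J\<^esub> h) = act (act x h) g"
    and inv: "\<forall>x\<in>carrier A. \<forall>h\<in>H. f (act x h) = f x"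
  shows "in_E J act H A f"
proof -
  interpret Aut: group "AutoGroup A" using grpA group.AutoGroup by blast
  interpret J: group J by (rule J(1))
  have "card (carrier A) > 0" using cardA pr prime_gt_0_nat by simp
  hence finA: "finite (carrier A)" by (rule card_ge_0_finite)
  have Tauto: "T \<subseteq> auto A" using subgroup.subset[OF T(1)] by (simp add: carrier_AutoGroup)
  have Kauto: "K \<subseteq> auto A" using K Tauto by blast
  have Hsub: "H \<subseteq> carrier J" using H subgroup.subset by blast
  have finH: "finite H" using Hsub J(2) finite_subset by blast
  have finK: "finite K" using Kauto finite_auto[OF finA] finite_subset by blast
  have Tcomm: "\<And>s t x. s \<in> T \<Longrightarrow> t \<in> T \<Longrightarrow> x \<in> carrier A \<Longrightarrow> s (t x) = t (s x)"
  proof -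
    fix s t x assume a: "s \<in> T" "t \<in> T" "x \<in> carrier A"
    have st: "s \<in> auto A" "t \<in> auto A" using a Tauto by auto
    have "s \<otimes>\<^bsub>AutoGroup A\<^esub> t = t \<otimes>\<^bsub>AutoGroup A\<^esub> s" using T(2) a(1,2) by blast
    hence "(s \<otimes>\<^bsub>AutoGroup A\<^esub> t) x = (t \<otimes>\<^bsub>AutoGroup A\<^esub> s) x" by simp
    thus "s (t x) = t (s x)"
      by (simp only: mult_AutoGroup_apply[OF st(1) st(2) a(3)] mult_AutoGroup_apply[OF st(2) st(1) a(3)])
  qed
  obtain tau where tau0: "\<forall>g\<in>carrier J. tau g \<in> T \<and> (\<forall>x\<in>carrier A. act x g = tau g x)"
  proof -
    have "\<forall>g\<in>carrier J. \<exists>t. t \<in> T \<and> (\<forall>x\<in>carrier A. act x g = t x)" using act_T by blast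
    from bchoice[OF this] show ?thesis using that by blast
  qed
  have tau: "\<And>g. g \<in> carrier J \<Longrightarrow> tau g \<in> T \<and> (\<forall>x\<in>carrier A. act x g = tau g x)"
    using tau0 by blast
  have tauA: "\<And>g. g \<in> carrier J \<Longrightarrow> tau g \<in> auto A" using tau Tauto by blast
  have act_closed: "\<And>x g. x \<in> carrier A \<Longrightarrow> g \<in> carrier J \<Longrightarrow> act x g \<in> carrier A"
  proof -
    fix x g assume a: "x \<in> carrier A" "g \<in> carrier J"
    have "act x g = tau g x" using tau[OF a(2)] a(1) by blast
    thus "act x g \<in> carrier A" using auto_closed[OF tauA[OF a(2)] a(1)] by simp
  qed
  have act_one: "\<And>g. g \<in> carrier J \<Longrightarrow> act \<one>\<^bsub>A\<^esub> g = \<one>\<^bsub>A\<^esub>"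
  proof -
    fix g assume a: "g \<in> carrier J"
    have "\<one>\<^bsub>A\<^esub> \<in> carrier A" using grpA by (simp add: group.is_monoid monoid.one_closed)
    hence "act \<one>\<^bsub>A\<^esub> g = tau g \<one>\<^bsub>A\<^esub>" using tau[OF a] by blast
    thus "act \<one>\<^bsub>A\<^esub> g = \<one>\<^bsub>A\<^esub>" using auto_one[OF grpA tauA[OF a]] by simp
  qed
  define GK where "GK = (AutoGroup A)\<lparr>carrier := K\<rparr>"
  define GH where "GH = J\<lparr>carrier := H\<rparr>"
  define phiH where "phiH = (\<lambda>g. \<lambda>x\<in>carrier A. act x g)"
  have grpGK: "group GK" unfolding GK_def using K(1) subgroup.subgroup_is_group Aut.is_group by blast
  have grpGH: "group GH" unfolding GH_def using H subgroup.subgroup_is_group J(1) by blast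
  have gaK: "group_action GK (carrier A) (\<lambda>k. k)"
    unfolding group_action_def group_hom_def
  proof (intro conjI grpGK group_BijGroup group_hom_axioms.intro)
    show "(\<lambda>k. k) \<in> hom GK (BijGroup (carrier A))"
      unfolding hom_def using Kauto auto_Bij
      by (auto simp: GK_def AutoGroup_def BijGroup_def)
  qed
  have gaH: "group_action GH (carrier A) phiH"
    unfolding group_action_def group_hom_def
  proof (intro conjI grpGH group_BijGroup group_hom_axioms.intro)
    have Bij: "\<And>g. g \<in> H \<Longrightarrow> phiH g \<in> Bij (carrier A)"
    proof -
      fix g assume g: "g \<in> H"
      have gJ: "g \<in> carrier J" using g Hsub by blast
      have tB: "tau g \<in> Bij (carrier A)" using auto_Bij[OF tauA[OF gJ]] .
      have "tau g \<in> extensional (carrier A)" using Bij_imp_extensional[OF tB] .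
      hence "phiH g = tau g" using tau[OF gJ]
        unfolding phiH_def by (intro extensionalityI[where A = "carrier A"]) auto
      thus "phiH g \<in> Bij (carrier A)" using tB by simp
    qed
    show "phiH \<in> hom GH (BijGroup (carrier A))"
      unfolding hom_def
    proof (intro CollectI conjI ballI)
      show "phiH \<in> carrier GH \<rightarrow> carrier (BijGroup (carrier A))"
        using Bij by (auto simp: GH_def BijGroup_def)
      fix g h assume "g \<in> carrier GH" "h \<in> carrier GH"
      hence gh: "g \<in> H" "h \<in> H" by (auto simp: GH_def)
      show "phiH (g \<otimes>\<^bsub>GH\<^esub> h) = phiH g \<otimes>\<^bsub>BijGroup (carrier A)\<^esub> phiH h"
      proof -
        have gJ: "g \<in> carrier J" "h \<in> carrier J" using gh Hsub by auto
        have "\<And>x. x \<in> carrier A \<Longrightarrow> act x (g \<otimes>\<^bsub>J\<^esub> h) = act (act x h) g"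
          using act_mult gJ by blast
        thus ?thesis
          using Bij[OF gh(1)] Bij[OF gh(2)] gJ act_closed
          by (auto simp: GH_def BijGroup_def phiH_def compose_def intro!: ext)
      qed
    qed
  qed
  interpret gK: group_action GK "carrier A" "\<lambda>k. k" by (rule gaK)
  interpret gH: group_action GH "carrier A" phiH by (rule gaH)
  have orbK: "\<And>x. orbit GK (\<lambda>k. k) x = orbit_in (\<lambda>x a. a x) K x"
    by (auto simp: orbit_def orbit_in_def GK_def)
  have stabK: "\<And>x. stabilizer GK (\<lambda>k. k) x = stab_in (\<lambda>x a. a x) K x"
    by (auto simp: stabilizer_def stab_in_def GK_def)
  have orbH: "\<And>x. x \<in> carrier A \<Longrightarrow> orbit GH phiH x = orbit_in act H x"
    by (auto simp: orbit_def orbit_in_def GH_def phiH_def)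
  have stabH: "\<And>x. x \<in> carrier A \<Longrightarrow> stabilizer GH phiH x = stab_in act H x"
    by (auto simp: stabilizer_def stab_in_def GH_def phiH_def)
  have ordK: "order GK = card K" by (simp add: order_def GK_def)
  have ordH: "order GH = card H" by (simp add: order_def GH_def)
  have finGK: "finite (carrier GK)" using finK by (simp add: GK_def)
  have finGH: "finite (carrier GH)" using finH by (simp add: GH_def)
  have osK: "\<And>x. x \<in> carrier A \<Longrightarrow> card (orbit_in (\<lambda>x a. a x) K x) * card (stab_in (\<lambda>x a. a x) K x) = card K"
    using gK.orbit_stabilizer_theorem orbK stabK ordK by metis
  have osH: "\<And>x. x \<in> carrier A \<Longrightarrow> card (orbit_in act H x) * card (stab_in act H x) = card H"
    using gH.orbit_stabilizer_theorem orbH stabH ordH by metis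
  have cardK0: "card K > 0" using finK K(1) subgroup.one_closed card_gt_0_iff by blast
  have cardH0: "card H > 0" using finH H subgroup.one_closed card_gt_0_iff by blast
  have stabK0: "\<And>x. x \<in> carrier A \<Longrightarrow> card (stab_in (\<lambda>x a. a x) K x) > 0"
    using osK cardK0 by (metis gr0I mult_0_right)
  have stabH0: "\<And>x. x \<in> carrier A \<Longrightarrow> card (stab_in act H x) > 0"
    using osH cardH0 by (metis gr0I mult_0_right)
  have orb_sub: "\<And>x. x \<in> carrier A \<Longrightarrow> orbit_in (\<lambda>x a. a x) K x \<subseteq> orbit_in act H x"
  proof -
    fix x assume x: "x \<in> carrier A"
    show "orbit_in (\<lambda>x a. a x) K x \<subseteq> orbit_in act H x"
    proof
      fix y assume "y \<in> orbit_in (\<lambda>x a. a x) K x"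
      then obtain k where k: "k \<in> K" "y = k x" unfolding orbit_in_def by auto
      then obtain h where h: "h \<in> H" "act x h = k x" using K_act x by blast
      hence "y = act x h" using k by simp
      thus "y \<in> orbit_in act H x" unfolding orbit_in_def using h(1) by (intro CollectI exI conjI)
    qed
  qed
  have finorbH: "\<And>x. finite (orbit_in act H x)"
    using finH unfolding orbit_in_def by simp
  have orbK_ne: "\<And>x. orbit_in (\<lambda>x a. a x) K x \<noteq> {}"
    using K(1) subgroup.one_closed unfolding orbit_in_def by fastforce
  have orb_le: "\<And>x. x \<in> carrier A \<Longrightarrow> card (orbit_in (\<lambda>x a. a x) K x) \<le> card (orbit_in act H x)"
    using orb_sub finorbH card_mono by blast
  have supp: "\<And>x. x \<in> carrier A \<Longrightarrow> f x \<noteq> 0 \<Longrightarrow> \<exists>t\<in>T. x = t n0"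
    using van unfolding orbit_in_def by blast
  have stabK_const: "\<And>x. x \<in> carrier A \<Longrightarrow> f x \<noteq> 0 \<Longrightarrow>
      stab_in (\<lambda>x a. a x) K x = stab_in (\<lambda>x a. a x) K n0"
  proof -
    fix x assume x: "x \<in> carrier A" "f x \<noteq> 0"
    then obtain t where t: "t \<in> T" "x = t n0" using supp by blast
    have "\<And>k. k \<in> K \<Longrightarrow> k (t n0) = t n0 \<longleftrightarrow> k n0 = n0"
    proof -
      fix k assume k: "k \<in> K"
      have kT: "k \<in> T" using k K(2) by blast
      have e: "k (t n0) = t (k n0)" using Tcomm[OF kT t(1) n0] .
      have kA: "k \<in> auto A" using k Kauto by blast
      have tA: "t \<in> auto A" using t(1) Tauto by blast
      have kn0: "k n0 \<in> carrier A" using auto_closed[OF kA n0] .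
      show "k (t n0) = t n0 \<longleftrightarrow> k n0 = n0"
        using e inj_on_eq_iff[OF auto_inj[OF tA] kn0 n0] by simp
    qed
    thus "stab_in (\<lambda>x a. a x) K x = stab_in (\<lambda>x a. a x) K n0"
      unfolding stab_in_def using t by auto
  qed
  have stabH_const: "\<And>x. x \<in> carrier A \<Longrightarrow> f x \<noteq> 0 \<Longrightarrow> stab_in act H x = stab_in act H n0"
  proof -
    fix x assume x: "x \<in> carrier A" "f x \<noteq> 0"
    then obtain t where t: "t \<in> T" "x = t n0" using supp by blast
    have tA: "t \<in> auto A" using t(1) Tauto by blast
    have tn0: "t n0 \<in> carrier A" using auto_closed[OF tA n0] .
    have "\<And>h. h \<in> H \<Longrightarrow> act (t n0) h = t n0 \<longleftrightarrow> act n0 h = n0"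
    proof -
      fix h assume h: "h \<in> H"
      have hJ: "h \<in> carrier J" using h Hsub by blast
      have "act (t n0) h = tau h (t n0)" using tau[OF hJ] tn0 by blast
      also have "\<dots> = t (tau h n0)" using Tcomm[OF conjunct1[OF tau[OF hJ]] t(1) n0] .
      finally have e: "act (t n0) h = t (act n0 h)" using tau[OF hJ] n0 by simp
      have an: "act n0 h \<in> carrier A" using act_closed[OF n0 hJ] .
      show "act (t n0) h = t n0 \<longleftrightarrow> act n0 h = n0"
        using e inj_on_eq_iff[OF auto_inj[OF tA] an n0] by simp
    qed
    thus "stab_in act H x = stab_in act H n0"
      unfolding stab_in_def using t by auto
  qed
  define cK where "cK = card (stab_in (\<lambda>x a. a x) K n0)"
  define cH where "cH = card (stab_in act H n0)"
  have cK0: "cK > 0" using stabK0 n0 cK_def by blast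
  have cH0: "cH > 0" using stabH0 n0 cH_def by blast
  have ptK: "\<And>x. x \<in> carrier A \<Longrightarrow> int (card (stab_in (\<lambda>x a. a x) K x)) * f x = int cK * f x"
  proof -
    fix x assume x: "x \<in> carrier A"
    show "int (card (stab_in (\<lambda>x a. a x) K x)) * f x = int cK * f x"
    proof (cases "f x = 0")
      case False thus ?thesis using stabK_const[OF x False] cK_def by simp
    qed simp
  qed
  have ptH: "\<And>x. x \<in> carrier A \<Longrightarrow> int (card (stab_in act H x)) * f x = int cH * f x"
  proof -
    fix x assume x: "x \<in> carrier A"
    show "int (card (stab_in act H x)) * f x = int cH * f x"
    proof (cases "f x = 0")
      case False thus ?thesis using stabH_const[OF x False] cH_def by simp
    qed simp
  qed
  have fE1: "\<forall>a\<in>carrier A. \<forall>h\<in>K. f (h a) = f a"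
   and fE2: "(\<Sum>Orb \<in> orbit_in (\<lambda>x a. a x) K ` carrier A. f (SOME x. x \<in> Orb)) = 1"
   and fE4: "\<forall>L. min_cocyclic A L \<longrightarrow> (\<forall>C \<in> rcosets\<^bsub>A\<^esub> L.
          (\<Sum>c \<in> C. int (card (stab_in (\<lambda>x a. a x) K c)) * f c) \<ge> 0)"
   and fE5: "\<forall>a \<in> carrier A. real_of_int (f a) \<ge>
          - hA A * (real (card (stab_in (\<lambda>x a. a x) K (pi_part A (pi0 A) a))) / real (card (stab_in (\<lambda>x a. a x) K a)))"
   and fE6: "\<exists>a \<in> carrier A. f a < 0"
    using fE unfolding in_E_def by auto
  define S where "S = (\<Sum>x\<in>carrier A. f x)"
  have orbitsK: "orbits GK (carrier A) (\<lambda>k. k) = orbit_in (\<lambda>x a. a x) K ` carrier A"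
    unfolding orbits_def using orbK by auto
  have orbitsH: "orbits GH (carrier A) phiH = orbit_in act H ` carrier A"
    unfolding orbits_def using orbH by auto
  have sumK: "int (card K) = int cK * S"
  proof -
    have "int (order GK) * (\<Sum>Ob \<in> orbits GK (carrier A) (\<lambda>k. k). f (SOME x. x \<in> Ob))
        = (\<Sum>x\<in>carrier A. int (card (stabilizer GK (\<lambda>k. k) x)) * f x)"
      by (rule gK.orbit_sum_formula[OF finGK finA]) (use fE1 in \<open>auto simp: GK_def\<close>)
    also have "\<dots> = (\<Sum>x\<in>carrier A. int cK * f x)" by (rule sum.cong[OF refl], subst stabK, erule ptK)
    finally show ?thesis using orbitsK fE2 ordK by (simp add: S_def sum_distrib_left)
  qed
  define s where "s = (\<Sum>Orb \<in> orbit_in act H ` carrier A. f (SOME x. x \<in> Orb))"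
  have sumH: "int (card H) * s = int cH * S"
  proof -
    have "int (order GH) * (\<Sum>Ob \<in> orbits GH (carrier A) phiH. f (SOME x. x \<in> Ob))
        = (\<Sum>x\<in>carrier A. int (card (stabilizer GH phiH x)) * f x)"
      by (rule gH.orbit_sum_formula[OF finGH finA]) (use inv in \<open>auto simp: GH_def phiH_def\<close>)
    also have "\<dots> = (\<Sum>x\<in>carrier A. int cH * f x)" by (rule sum.cong[OF refl], subst stabH, assumption, erule ptH)
    finally show ?thesis using orbitsH ordH by (simp add: s_def S_def sum_distrib_left)
  qed
  have s1: "s = 1"
  proof -
    define oK where "oK = card (orbit_in (\<lambda>x a. a x) K n0)"
    define oH where "oH = card (orbit_in act H n0)"
    have "oK * cK = card K" using osK[OF n0] oK_def cK_def by simp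
    hence "int oK * int cK = int cK * S" using sumK by (simp flip: of_nat_mult)
    hence SoK: "S = int oK" using cK0 by simp
    have "oH * cH = card H" using osH[OF n0] oH_def cH_def by simp
    hence "int oH * int cH * s = int cH * int oK" using sumH SoK by (simp flip: of_nat_mult)
    hence e: "int oH * s = int oK" using cH0 by (simp add: algebra_simps)
    have le: "oK \<le> oH" using orb_le[OF n0] oK_def oH_def by simp
    have pos: "oK > 0" using orbK_ne finorbH orb_sub[OF n0] oK_def
      by (meson card_gt_0_iff finite_subset)
    have s0: "s > 0"
    proof (rule ccontr)
      assume "\<not> s > 0"
      hence "int oH * s \<le> 0" by (simp add: mult_nonneg_nonpos)
      thus False using e pos by simp
    qed
    have s1: "s \<le> 1"
    proof (rule ccontr)
      assume "\<not> s \<le> 1"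
      hence "s \<ge> 2" by simp
      hence "int oH * 2 \<le> int oH * s" by (simp add: mult_left_mono)
      thus False using e pos le by simp
    qed
    show "s = 1" using s0 s1 by simp
  qed
  have pi0: "p \<notin> pi0 A"
  proof
    assume "p \<in> pi0 A"
    hence cyc: "cyclic_group (A\<lparr>carrier := sylow_part A p\<rparr>)" unfolding pi0_def by auto
    have "sylow_part A p = carrier A"
      unfolding sylow_part_def using pi_elem_p[OF pr, of "{p}" A] expp by auto
    hence "cyclic_group A" using cyc by simp
    thus False using not_cyclic_exp_p[OF grpA pr expp cardA] by simp
  qed
  have pp1: "\<And>a. a \<in> carrier A \<Longrightarrow> pi_part A (pi0 A) a = \<one>\<^bsub>A\<^esub>"
    using pi_part_one[OF grpA pr expp _ pi0] by blast
  have stK1: "stab_in (\<lambda>x a. a x) K \<one>\<^bsub>A\<^esub> = K"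
    unfolding stab_in_def using Kauto auto_one[OF grpA] by auto
  have stH1: "stab_in act H \<one>\<^bsub>A\<^esub> = H"
    unfolding stab_in_def using Hsub act_one by auto
  have C1: "\<forall>a \<in> carrier A. \<forall>h \<in> H. f (act a h) = f a" using inv by blast
  have C2: "(\<Sum>Orb \<in> orbit_in act H ` carrier A. f (SOME x. x \<in> Orb)) = 1" using s1 s_def by simp
  have C3: "\<exists>c \<in> carrier A. \<forall>a \<in> carrier A. f a \<noteq> 0 \<longrightarrow> loc_conj J act A c a"
  proof (intro bexI[OF _ n0] ballI impI)
    fix a assume a: "a \<in> carrier A" "f a \<noteq> 0"
    then obtain t where t: "t \<in> T" "a = t n0" using supp by blast
    show "loc_conj J act A n0 a"
      unfolding loc_conj_def
    proof (intro allI impI)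
      fix r :: nat assume r: "Factorial_Ring.prime r"
      show "\<exists>g\<in>carrier J. act (pi_part A {r} n0) g = pi_part A {r} a"
      proof (cases "r = p")
        case True
        obtain g where g: "g \<in> carrier J" "\<forall>x\<in>carrier A. act x g = t x" using T_act t by blast
        show ?thesis using g pi_part_self[OF grpA pr expp] n0 a t True by (intro bexI[OF _ g(1)]) auto
      next
        case False
        hence "p \<notin> {r}" by auto
        have e1: "pi_part A {r} n0 = \<one>\<^bsub>A\<^esub>" using pi_part_one[OF grpA pr expp n0 \<open>p \<notin> {r}\<close>] .
        have e2: "pi_part A {r} a = \<one>\<^bsub>A\<^esub>" using pi_part_one[OF grpA pr expp a(1) \<open>p \<notin> {r}\<close>] .
        show ?thesis using act_one[OF J.one_closed] e1 e2 J.one_closed by (intro bexI[of _ "\<one>\<^bsub>J\<^esub>"]) simp_all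
      qed
    qed
  qed
  have C4: "\<forall>L. min_cocyclic A L \<longrightarrow> (\<forall>C \<in> rcosets\<^bsub>A\<^esub> L.
          (\<Sum>c \<in> C. int (card (stab_in act H c)) * f c) \<ge> 0)"
  proof (intro allI impI ballI)
    fix L C assume L: "min_cocyclic A L" and C: "C \<in> rcosets\<^bsub>A\<^esub> L"
    have "subgroup L A" using L unfolding min_cocyclic_def by blast
    hence "C \<subseteq> carrier A" using subgroup.rcosets_carrier[OF _ grpA C] by blast
    hence e1: "(\<Sum>c \<in> C. int (card (stab_in (\<lambda>x a. a x) K c)) * f c) = int cK * (\<Sum>c\<in>C. f c)"
      and e2: "(\<Sum>c \<in> C. int (card (stab_in act H c)) * f c) = int cH * (\<Sum>c\<in>C. f c)"
      using ptK ptH by (auto simp: sum_distrib_left intro!: sum.cong)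
    have "(\<Sum>c \<in> C. int (card (stab_in (\<lambda>x a. a x) K c)) * f c) \<ge> 0" using fE4 L C by blast
    hence "int cK * (\<Sum>c\<in>C. f c) \<ge> 0" using e1 by simp
    hence "(\<Sum>c\<in>C. f c) \<ge> 0" using cK0 by (simp add: zero_le_mult_iff)
    thus "(\<Sum>c \<in> C. int (card (stab_in act H c)) * f c) \<ge> 0" using e2 by simp
  qed
  have C5: "\<forall>a \<in> carrier A. real_of_int (f a) \<ge>
          - hA A * (real (card (stab_in act H (pi_part A (pi0 A) a))) / real (card (stab_in act H a)))"
  proof
    fix a assume a: "a \<in> carrier A"
    have hA0: "hA A \<ge> 0" by (rule hA_nonneg)
    have rH: "real (card (stab_in act H (pi_part A (pi0 A) a))) / real (card (stab_in act H a))
            = real (card (orbit_in act H a))"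
      using pp1[OF a] stH1 osH[OF a] stabH0[OF a] by (simp add: field_simps flip: of_nat_mult)
    have rK: "real (card (stab_in (\<lambda>x a. a x) K (pi_part A (pi0 A) a))) / real (card (stab_in (\<lambda>x a. a x) K a))
            = real (card (orbit_in (\<lambda>x a. a x) K a))"
      using pp1[OF a] stK1 osK[OF a] stabK0[OF a] by (simp add: field_simps flip: of_nat_mult)
    have "hA A * real (card (orbit_in (\<lambda>x a. a x) K a)) \<le> hA A * real (card (orbit_in act H a))"
      using orb_le[OF a] hA0 by (simp add: mult_left_mono)
    moreover have "real_of_int (f a) \<ge> - hA A * real (card (orbit_in (\<lambda>x a. a x) K a))"
    proof -
      have "real_of_int (f a) \<ge> - hA A * (real (card (stab_in (\<lambda>x a. a x) K (pi_part A (pi0 A) a))) / real (card (stab_in (\<lambda>x a. a x) K a)))"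
        using fE5 a by blast
      thus ?thesis by (simp only: rK)
    qed
    ultimately show "real_of_int (f a) \<ge>
          - hA A * (real (card (stab_in act H (pi_part A (pi0 A) a))) / real (card (stab_in act H a)))"
      by (simp only: rH)
  qed
  show ?thesis unfolding in_E_def using C1 C2 C3 C4 C5 fE6 by blast
qed


lemma sdprod_carrier: "carrier (sdprod N W phi) = carrier N \<times> carrier W"
  by (simp add: sdprod_def)

lemma sdprod_mult: "(m, s) \<otimes>\<^bsub>sdprod N W phi\<^esub> (m', s') = (m \<otimes>\<^bsub>N\<^esub> phi s m', s \<otimes>\<^bsub>W\<^esub> s')"
  by (simp add: sdprod_def)

lemma sdprod_one: "\<one>\<^bsub>sdprod N W phi\<^esub> = (\<one>\<^bsub>N\<^esub>, \<one>\<^bsub>W\<^esub>)"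
  by (simp add: sdprod_def)

locale sd_ctx =
  fixes N :: "('a, 'x) monoid_scheme" and W :: "('g, 'y) monoid_scheme" and phi :: "'g \<Rightarrow> 'a \<Rightarrow> 'a"
  assumes grpN: "group N" and grpW: "group W"
   and cl: "\<And>s x. s\<in>carrier W \<Longrightarrow> x\<in>carrier N \<Longrightarrow> phi s x \<in> carrier N"
   and hm: "\<And>s x y. s\<in>carrier W \<Longrightarrow> x\<in>carrier N \<Longrightarrow> y\<in>carrier N \<Longrightarrow> phi s (x \<otimes>\<^bsub>N\<^esub> y) = phi s x \<otimes>\<^bsub>N\<^esub> phi s y"
   and cmp: "\<And>s t x. s\<in>carrier W \<Longrightarrow> t\<in>carrier W \<Longrightarrow> x\<in>carrier N \<Longrightarrow> phi (s \<otimes>\<^bsub>W\<^esub> t) x = phi s (phi t x)"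
   and one: "\<And>x. x\<in>carrier N \<Longrightarrow> phi \<one>\<^bsub>W\<^esub> x = x"
begin

lemma phi_one: "s \<in> carrier W \<Longrightarrow> phi s \<one>\<^bsub>N\<^esub> = \<one>\<^bsub>N\<^esub>"
proof -
  assume s: "s \<in> carrier W"
  interpret N: group N by (rule grpN)
  have "phi s \<one>\<^bsub>N\<^esub> = phi s (\<one>\<^bsub>N\<^esub> \<otimes>\<^bsub>N\<^esub> \<one>\<^bsub>N\<^esub>)" by simp
  also have "\<dots> = phi s \<one>\<^bsub>N\<^esub> \<otimes>\<^bsub>N\<^esub> phi s \<one>\<^bsub>N\<^esub>" using hm[OF s N.one_closed N.one_closed] .
  finally have "phi s \<one>\<^bsub>N\<^esub> \<otimes>\<^bsub>N\<^esub> \<one>\<^bsub>N\<^esub> = phi s \<one>\<^bsub>N\<^esub> \<otimes>\<^bsub>N\<^esub> phi s \<one>\<^bsub>N\<^esub>"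
    using cl[OF s N.one_closed] by simp
  thus ?thesis using N.l_cancel cl[OF s N.one_closed] by (metis N.one_closed)
qed

lemma phi_inv: "s \<in> carrier W \<Longrightarrow> x \<in> carrier N \<Longrightarrow> phi s (inv\<^bsub>N\<^esub> x) = inv\<^bsub>N\<^esub> (phi s x)"
proof -
  assume s: "s \<in> carrier W" and x: "x \<in> carrier N"
  interpret N: group N by (rule grpN)
  have "phi s (inv\<^bsub>N\<^esub> x) \<otimes>\<^bsub>N\<^esub> phi s x = \<one>\<^bsub>N\<^esub>"
    using hm[OF s N.inv_closed[OF x] x] phi_one[OF s] x by simp
  thus ?thesis using N.inv_equality cl s x N.inv_closed by metis
qed

lemma sd_group: "group (sdprod N W phi)"
proof -
  interpret N: group N by (rule grpN)
  interpret W: group W by (rule grpW)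
  show ?thesis
  proof (rule groupI)
    fix x y assume "x \<in> carrier (sdprod N W phi)" "y \<in> carrier (sdprod N W phi)"
    thus "x \<otimes>\<^bsub>sdprod N W phi\<^esub> y \<in> carrier (sdprod N W phi)"
      by (cases x, cases y) (auto simp: sdprod_carrier sdprod_mult cl)
  next
    show "\<one>\<^bsub>sdprod N W phi\<^esub> \<in> carrier (sdprod N W phi)" by (simp add: sdprod_carrier sdprod_one)
  next
    fix x y z assume xyz: "x \<in> carrier (sdprod N W phi)" "y \<in> carrier (sdprod N W phi)" "z \<in> carrier (sdprod N W phi)"
    obtain m s where x: "x = (m, s)" by (cases x)
    obtain m' s' where y: "y = (m', s')" by (cases y)
    obtain m'' s'' where z: "z = (m'', s'')" by (cases z)
    have c: "m \<in> carrier N" "s \<in> carrier W" "m' \<in> carrier N" "s' \<in> carrier W" "m'' \<in> carrier N" "s'' \<in> carrier W"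
      using xyz x y z by (auto simp: sdprod_carrier)
    show "x \<otimes>\<^bsub>sdprod N W phi\<^esub> y \<otimes>\<^bsub>sdprod N W phi\<^esub> z = x \<otimes>\<^bsub>sdprod N W phi\<^esub> (y \<otimes>\<^bsub>sdprod N W phi\<^esub> z)"
      using c by (simp add: x y z sdprod_mult hm cl cmp N.m_assoc W.m_assoc)
  next
    fix x assume "x \<in> carrier (sdprod N W phi)"
    thus "\<one>\<^bsub>sdprod N W phi\<^esub> \<otimes>\<^bsub>sdprod N W phi\<^esub> x = x"
      by (cases x) (auto simp: sdprod_carrier sdprod_mult sdprod_one one cl)
  next
    fix x assume xc: "x \<in> carrier (sdprod N W phi)"
    obtain m s where x: "x = (m, s)" by (cases x)
    have c: "m \<in> carrier N" "s \<in> carrier W" using xc x by (auto simp: sdprod_carrier)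
    let ?y = "(phi (inv\<^bsub>W\<^esub> s) (inv\<^bsub>N\<^esub> m), inv\<^bsub>W\<^esub> s)"
    have "?y \<otimes>\<^bsub>sdprod N W phi\<^esub> x = \<one>\<^bsub>sdprod N W phi\<^esub>"
      using c by (simp add: x sdprod_mult sdprod_one hm[symmetric] phi_one)
    moreover have "?y \<in> carrier (sdprod N W phi)" using c by (simp add: sdprod_carrier cl)
    ultimately show "\<exists>y\<in>carrier (sdprod N W phi). y \<otimes>\<^bsub>sdprod N W phi\<^esub> x = \<one>\<^bsub>sdprod N W phi\<^esub>" by blast
  qed
qed

lemma sd_inv:
  assumes "m \<in> carrier N" "s \<in> carrier W"
  shows "inv\<^bsub>sdprod N W phi\<^esub> (m, s) = (phi (inv\<^bsub>W\<^esub> s) (inv\<^bsub>N\<^esub> m), inv\<^bsub>W\<^esub> s)"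
proof -
  interpret N: group N by (rule grpN)
  interpret W: group W by (rule grpW)
  interpret G: group "sdprod N W phi" by (rule sd_group)
  show ?thesis
  proof (rule G.inv_equality)
    show "(phi (inv\<^bsub>W\<^esub> s) (inv\<^bsub>N\<^esub> m), inv\<^bsub>W\<^esub> s) \<otimes>\<^bsub>sdprod N W phi\<^esub> (m, s) = \<one>\<^bsub>sdprod N W phi\<^esub>"
      using assms by (simp add: sdprod_mult sdprod_one hm[symmetric] phi_one)
    show "(m, s) \<in> carrier (sdprod N W phi)" using assms by (simp add: sdprod_carrier)
    show "(phi (inv\<^bsub>W\<^esub> s) (inv\<^bsub>N\<^esub> m), inv\<^bsub>W\<^esub> s) \<in> carrier (sdprod N W phi)"
      using assms by (simp add: sdprod_carrier cl)
  qed
qed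

lemma sd_conj:
  assumes comm: "comm_group N" and x: "x \<in> carrier N" and g: "g \<in> carrier (sdprod N W phi)"
  shows "conj_sd (sdprod N W phi) W x g = phi (inv\<^bsub>W\<^esub> (snd g)) x"
proof -
  interpret N: comm_group N by (rule comm)
  interpret W: group W by (rule grpW)
  obtain m s where gs: "g = (m, s)" by (cases g)
  have c: "m \<in> carrier N" "s \<in> carrier W" using g gs by (auto simp: sdprod_carrier)
  let ?s = "inv\<^bsub>W\<^esub> s"
  have s': "?s \<in> carrier W" using c by simp
  have "conj_sd (sdprod N W phi) W x g
      = phi ?s (inv\<^bsub>N\<^esub> m) \<otimes>\<^bsub>N\<^esub> phi ?s x \<otimes>\<^bsub>N\<^esub> phi ?s m"
    unfolding conj_sd_def using c x by (simp add: gs sd_inv sdprod_mult cl)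
  also have "\<dots> = phi ?s (inv\<^bsub>N\<^esub> m \<otimes>\<^bsub>N\<^esub> x \<otimes>\<^bsub>N\<^esub> m)"
    using c x s' by (simp add: hm)
  also have "inv\<^bsub>N\<^esub> m \<otimes>\<^bsub>N\<^esub> x \<otimes>\<^bsub>N\<^esub> m = x"
    using c x by (metis N.inv_closed N.m_assoc N.m_comm N.r_inv N.r_one)
  finally show ?thesis by (simp add: gs)
qed

end

lemma lcos_eq_rcos:
  assumes "comm_group G" "x \<in> carrier G" "H \<subseteq> carrier G"
  shows "x <#\<^bsub>G\<^esub> H = H #>\<^bsub>G\<^esub> x"
proof -
  interpret comm_group G by (rule assms(1))
  show ?thesis unfolding l_coset_def r_coset_def using assms(2,3) m_comm by (auto intro!: UN_I)
qed

lemma DirProd_pow: "(g, h) [^]\<^bsub>G \<times>\<times> H\<^esub> (n::nat) = (g [^]\<^bsub>G\<^esub> n, h [^]\<^bsub>H\<^esub> n)"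
  by (induction n) auto

lemma Zpp_facts:
  assumes "Factorial_Ring.prime (p::nat)" and "group A" and iso: "A \<cong> integer_mod_group p \<times>\<times> integer_mod_group p"
  shows "comm_group A" "\<forall>x\<in>carrier A. x [^]\<^bsub>A\<^esub> p = \<one>\<^bsub>A\<^esub>" "card (carrier A) = p * p" "finite (carrier A)"
proof -
  let ?Z = "integer_mod_group p \<times>\<times> integer_mod_group p"
  have p0: "p > 0" using assms(1) prime_gt_0_nat by blast
  have gZ: "group ?Z" by (simp add: DirProd_group)
  have cZ: "comm_group ?Z"
    by (rule group.group_comm_groupI[OF gZ]) (auto simp: add.commute)
  have "?Z \<cong> A" using group.iso_sym[OF assms(2) iso] .
  thus "comm_group A" using comm_group.iso_imp_comm_group[OF cZ] assms(2) group.is_monoid by blast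
  have "card (carrier A) = card (carrier ?Z)" using iso_same_card[OF iso] .
  also have "\<dots> = p * p" using p0 by (simp add: carrier_integer_mod_group card_cartesian_product)
  finally show cA: "card (carrier A) = p * p" .
  thus "finite (carrier A)" using p0 by (metis card.infinite mult_is_0 not_gr_zero)
  obtain h where h: "h \<in> iso A ?Z" using iso unfolding is_iso_def by auto
  have hh: "h \<in> hom A ?Z" using h by (simp add: iso_def)
  have inj: "inj_on h (carrier A)" using h by (simp add: iso_def bij_betw_def)
  show "\<forall>x\<in>carrier A. x [^]\<^bsub>A\<^esub> p = \<one>\<^bsub>A\<^esub>"
  proof
    fix x assume x: "x \<in> carrier A"
    obtain u v where uv: "h x = (u, v)" by (cases "h x")
    have "h (x [^]\<^bsub>A\<^esub> p) = (h x) [^]\<^bsub>?Z\<^esub> p" using hom_nat_pow[OF hh x assms(2) gZ] .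
    also have "\<dots> = (0, 0)" using p0 by (simp add: uv DirProd_pow)
    also have "\<dots> = h \<one>\<^bsub>A\<^esub>" using hom_one[OF hh assms(2) gZ] by simp
    finally show "x [^]\<^bsub>A\<^esub> p = \<one>\<^bsub>A\<^esub>"
      using inj x assms(2) by (meson group.is_monoid monoid.nat_pow_closed monoid.one_closed inj_onD)
  qed
qed


locale ctx =
  fixes p q :: nat
    and Np :: "'a monoid" and Nq :: "'b monoid"
    and Tp Kp :: "('a \<Rightarrow> 'a) set" and Tq Kq :: "('b \<Rightarrow> 'b) set"
    and fp :: "'a \<Rightarrow> int" and fq :: "'b \<Rightarrow> int"
    and np :: 'a and nq :: 'b
    and \<alpha> :: "('a \<Rightarrow> 'a) set \<Rightarrow> ('b \<Rightarrow> 'b) set"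
  assumes primes: "Factorial_Ring.prime p" "Factorial_Ring.prime q" "p \<noteq> q"
    and grp: "group Np" "group Nq"
    and Np_iso: "Np \<cong> integer_mod_group p \<times>\<times> integer_mod_group p"
    and Nq_iso: "Nq \<cong> integer_mod_group q \<times>\<times> integer_mod_group q"
    and Tp: "subgroup Tp (AutoGroup Np)" "\<forall>a\<in>Tp. \<forall>b\<in>Tp. a \<otimes>\<^bsub>AutoGroup Np\<^esub> b = b \<otimes>\<^bsub>AutoGroup Np\<^esub> a"
    and Tq: "subgroup Tq (AutoGroup Nq)" "\<forall>a\<in>Tq. \<forall>b\<in>Tq. a \<otimes>\<^bsub>AutoGroup Nq\<^esub> b = b \<otimes>\<^bsub>AutoGroup Nq\<^esub> a"
    and Kp: "subgroup Kp (AutoGroup Np)" "Kp \<subseteq> Tp"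
    and Kq: "subgroup Kq (AutoGroup Nq)" "Kq \<subseteq> Tq"
    and fpE: "in_E (AutoGroup Np) (\<lambda>x a. a x) Kp Np fp"
    and fqE: "in_E (AutoGroup Nq) (\<lambda>x a. a x) Kq Nq fq"
    and n: "np \<in> carrier Np" "nq \<in> carrier Nq" "fp np = fq nq" "fp np \<noteq> 0"
    and vanp: "\<forall>x \<in> carrier Np. x \<notin> orbit_in (\<lambda>x a. a x) Tp np \<longrightarrow> fp x = 0"
    and vanq: "\<forall>y \<in> carrier Nq. y \<notin> orbit_in (\<lambda>y b. b y) Tq nq \<longrightarrow> fq y = 0"
    and \<alpha>_iso: "\<alpha> \<in> iso ((AutoGroup Np)\<lparr>carrier := Tp\<rparr> Mod Kp) ((AutoGroup Nq)\<lparr>carrier := Tq\<rparr> Mod Kq)"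
    and \<alpha>_compat: "\<forall>a \<in> Tp. \<forall>b \<in> Tq.
        b <#\<^bsub>(AutoGroup Nq)\<lparr>carrier := Tq\<rparr>\<^esub> Kq
          = \<alpha> (inv\<^bsub>(AutoGroup Np)\<lparr>carrier := Tp\<rparr>\<^esub> a <#\<^bsub>(AutoGroup Np)\<lparr>carrier := Tp\<rparr>\<^esub> Kp)
        \<longrightarrow> fp (a np) = fq (b nq)"
begin

abbreviation "AP \<equiv> AutoGroup Np"
abbreviation "AQ \<equiv> AutoGroup Nq"
abbreviation "TP \<equiv> AP\<lparr>carrier := Tp\<rparr>"
abbreviation "TQ \<equiv> AQ\<lparr>carrier := Tq\<rparr>"
abbreviation "QP \<equiv> TP Mod Kp"
abbreviation "QQ \<equiv> TQ Mod Kq"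

definition Gam where "Gam = {\<sigma> \<in> Tp \<times> Tq. \<alpha> (Kp #>\<^bsub>TP\<^esub> fst \<sigma>) = Kq #>\<^bsub>TQ\<^esub> snd \<sigma>}"

lemma gAP: "group AP" using grp(1) group.AutoGroup by blast
lemma gAQ: "group AQ" using grp(2) group.AutoGroup by blast

lemma Tp_auto: "Tp \<subseteq> auto Np" using subgroup.subset[OF Tp(1)] by (simp add: carrier_AutoGroup)
lemma Tq_auto: "Tq \<subseteq> auto Nq" using subgroup.subset[OF Tq(1)] by (simp add: carrier_AutoGroup)

lemma cTP: "comm_group TP"
proof -
  interpret AP: group AP by (rule gAP)
  have g: "group TP" using subgroup.subgroup_is_group[OF Tp(1) gAP] .
  show ?thesis by (rule group.group_comm_groupI[OF g]) (use Tp(2) in auto)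
qed

lemma cTQ: "comm_group TQ"
proof -
  interpret AQ: group AQ by (rule gAQ)
  have g: "group TQ" using subgroup.subgroup_is_group[OF Tq(1) gAQ] .
  show ?thesis by (rule group.group_comm_groupI[OF g]) (use Tq(2) in auto)
qed

lemma inv_TP: "a \<in> Tp \<Longrightarrow> inv\<^bsub>TP\<^esub> a = inv\<^bsub>AP\<^esub> a"
  using group.m_inv_consistent[OF gAP Tp(1)] by blast
lemma inv_TQ: "b \<in> Tq \<Longrightarrow> inv\<^bsub>TQ\<^esub> b = inv\<^bsub>AQ\<^esub> b"
  using group.m_inv_consistent[OF gAQ Tq(1)] by blast

lemma Kp_sub: "subgroup Kp TP"
  using Kp inv_TP by (auto simp: subgroup_def)

lemma Kq_sub: "subgroup Kq TQ"
  using Kq inv_TQ by (auto simp: subgroup_def)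

lemma Kp_normal: "Kp \<lhd> TP" using comm_group.subgroup_imp_normal[OF cTP Kp_sub] .
lemma Kq_normal: "Kq \<lhd> TQ" using comm_group.subgroup_imp_normal[OF cTQ Kq_sub] .

lemma gQP: "group QP" using normal.factorgroup_is_group[OF Kp_normal] .
lemma gQQ: "group QQ" using normal.factorgroup_is_group[OF Kq_normal] .

lemma \<alpha>_hom: "group_hom QP QQ \<alpha>"
  using \<alpha>_iso gQP gQQ by (simp add: group_hom_def group_hom_axioms_def iso_def)

lemma cosP: "a \<in> Tp \<Longrightarrow> Kp #>\<^bsub>TP\<^esub> a \<in> carrier QP"
  by (auto simp: FactGroup_def RCOSETS_def)
lemma cosQ: "b \<in> Tq \<Longrightarrow> Kq #>\<^bsub>TQ\<^esub> b \<in> carrier QQ"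
  by (auto simp: FactGroup_def RCOSETS_def)

lemma cos_multP: "a \<in> Tp \<Longrightarrow> a' \<in> Tp \<Longrightarrow>
   Kp #>\<^bsub>TP\<^esub> (a \<otimes>\<^bsub>AP\<^esub> a') = (Kp #>\<^bsub>TP\<^esub> a) \<otimes>\<^bsub>QP\<^esub> (Kp #>\<^bsub>TP\<^esub> a')"
  using normal.rcos_sum[OF Kp_normal, of a a'] by (simp add: FactGroup_def)
lemma cos_multQ: "b \<in> Tq \<Longrightarrow> b' \<in> Tq \<Longrightarrow>
   Kq #>\<^bsub>TQ\<^esub> (b \<otimes>\<^bsub>AQ\<^esub> b') = (Kq #>\<^bsub>TQ\<^esub> b) \<otimes>\<^bsub>QQ\<^esub> (Kq #>\<^bsub>TQ\<^esub> b')"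
  using normal.rcos_sum[OF Kq_normal, of b b'] by (simp add: FactGroup_def)

lemma cos_invP: "a \<in> Tp \<Longrightarrow> Kp #>\<^bsub>TP\<^esub> (inv\<^bsub>AP\<^esub> a) = inv\<^bsub>QP\<^esub> (Kp #>\<^bsub>TP\<^esub> a)"
  using normal.rcos_inv[OF Kp_normal, of a] normal.inv_FactGroup[OF Kp_normal cosP, of a] inv_TP[of a]
  by simp
lemma cos_invQ: "b \<in> Tq \<Longrightarrow> Kq #>\<^bsub>TQ\<^esub> (inv\<^bsub>AQ\<^esub> b) = inv\<^bsub>QQ\<^esub> (Kq #>\<^bsub>TQ\<^esub> b)"
  using normal.rcos_inv[OF Kq_normal, of b] normal.inv_FactGroup[OF Kq_normal cosQ, of b] inv_TQ[of b]
  by simp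

lemma Tp_mult: "a \<in> Tp \<Longrightarrow> a' \<in> Tp \<Longrightarrow> a \<otimes>\<^bsub>AP\<^esub> a' \<in> Tp" using subgroup.m_closed[OF Tp(1)] .
lemma Tq_mult: "b \<in> Tq \<Longrightarrow> b' \<in> Tq \<Longrightarrow> b \<otimes>\<^bsub>AQ\<^esub> b' \<in> Tq" using subgroup.m_closed[OF Tq(1)] .
lemma Tp_inv: "a \<in> Tp \<Longrightarrow> inv\<^bsub>AP\<^esub> a \<in> Tp" using subgroup.m_inv_closed[OF Tp(1)] .
lemma Tq_inv: "b \<in> Tq \<Longrightarrow> inv\<^bsub>AQ\<^esub> b \<in> Tq" using subgroup.m_inv_closed[OF Tq(1)] .
lemma Tp_one: "\<one>\<^bsub>AP\<^esub> \<in> Tp" using subgroup.one_closed[OF Tp(1)] .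
lemma Tq_one: "\<one>\<^bsub>AQ\<^esub> \<in> Tq" using subgroup.one_closed[OF Tq(1)] .

lemma Gam_mult: "(a, b) \<in> Gam \<Longrightarrow> (a', b') \<in> Gam \<Longrightarrow> (a \<otimes>\<^bsub>AP\<^esub> a', b \<otimes>\<^bsub>AQ\<^esub> b') \<in> Gam"
proof -
  assume g: "(a, b) \<in> Gam" "(a', b') \<in> Gam"
  hence t: "a \<in> Tp" "b \<in> Tq" "a' \<in> Tp" "b' \<in> Tq" by (auto simp: Gam_def)
  have e: "\<alpha> (Kp #>\<^bsub>TP\<^esub> a) = Kq #>\<^bsub>TQ\<^esub> b" "\<alpha> (Kp #>\<^bsub>TP\<^esub> a') = Kq #>\<^bsub>TQ\<^esub> b'" using g by (auto simp: Gam_def)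
  have "\<alpha> (Kp #>\<^bsub>TP\<^esub> (a \<otimes>\<^bsub>AP\<^esub> a')) = \<alpha> (Kp #>\<^bsub>TP\<^esub> a) \<otimes>\<^bsub>QQ\<^esub> \<alpha> (Kp #>\<^bsub>TP\<^esub> a')"
    using cos_multP[OF t(1,3)] group_hom.hom_mult[OF \<alpha>_hom cosP[OF t(1)] cosP[OF t(3)]] by simp
  also have "\<dots> = Kq #>\<^bsub>TQ\<^esub> (b \<otimes>\<^bsub>AQ\<^esub> b')" using e cos_multQ[OF t(2,4)] by simp
  finally show ?thesis using t Tp_mult Tq_mult by (simp add: Gam_def)
qed

lemma Gam_inv: "(a, b) \<in> Gam \<Longrightarrow> (inv\<^bsub>AP\<^esub> a, inv\<^bsub>AQ\<^esub> b) \<in> Gam"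
proof -
  assume g: "(a, b) \<in> Gam"
  hence t: "a \<in> Tp" "b \<in> Tq" by (auto simp: Gam_def)
  have e: "\<alpha> (Kp #>\<^bsub>TP\<^esub> a) = Kq #>\<^bsub>TQ\<^esub> b" using g by (auto simp: Gam_def)
  have "\<alpha> (Kp #>\<^bsub>TP\<^esub> (inv\<^bsub>AP\<^esub> a)) = inv\<^bsub>QQ\<^esub> \<alpha> (Kp #>\<^bsub>TP\<^esub> a)"
    using cos_invP[OF t(1)] group_hom.hom_inv[OF \<alpha>_hom cosP[OF t(1)]] by simp
  also have "\<dots> = Kq #>\<^bsub>TQ\<^esub> (inv\<^bsub>AQ\<^esub> b)" using e cos_invQ[OF t(2)] by simp
  finally show ?thesis using t Tp_inv Tq_inv by (simp add: Gam_def)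
qed

lemma Gam_one: "(\<one>\<^bsub>AP\<^esub>, \<one>\<^bsub>AQ\<^esub>) \<in> Gam"
proof -
  have "Kp #>\<^bsub>TP\<^esub> \<one>\<^bsub>AP\<^esub> = \<one>\<^bsub>QP\<^esub>"
    using subgroup.rcos_const[OF Kp_sub subgroup.subgroup_is_group[OF Tp(1) gAP]] subgroup.one_closed[OF Kp(1)]
    by (simp add: FactGroup_def)
  moreover have "Kq #>\<^bsub>TQ\<^esub> \<one>\<^bsub>AQ\<^esub> = \<one>\<^bsub>QQ\<^esub>"
    using subgroup.rcos_const[OF Kq_sub subgroup.subgroup_is_group[OF Tq(1) gAQ]] subgroup.one_closed[OF Kq(1)]
    by (simp add: FactGroup_def)
  ultimately show ?thesis using group_hom.hom_one[OF \<alpha>_hom] Tp_one Tq_one by (simp add: Gam_def)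
qed

lemma Gam_K1: "k \<in> Kp \<Longrightarrow> (k, \<one>\<^bsub>AQ\<^esub>) \<in> Gam"
proof -
  assume k: "k \<in> Kp"
  have "Kp #>\<^bsub>TP\<^esub> k = \<one>\<^bsub>QP\<^esub>"
    using subgroup.rcos_const[OF Kp_sub subgroup.subgroup_is_group[OF Tp(1) gAP] k]
    by (simp add: FactGroup_def)
  moreover have "Kq #>\<^bsub>TQ\<^esub> \<one>\<^bsub>AQ\<^esub> = \<one>\<^bsub>QQ\<^esub>"
    using subgroup.rcos_const[OF Kq_sub subgroup.subgroup_is_group[OF Tq(1) gAQ]] subgroup.one_closed[OF Kq(1)]
    by (simp add: FactGroup_def)
  ultimately show ?thesis using group_hom.hom_one[OF \<alpha>_hom] k Kp(2) Tq_one by (auto simp: Gam_def)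
qed

lemma Gam_K2: "k \<in> Kq \<Longrightarrow> (\<one>\<^bsub>AP\<^esub>, k) \<in> Gam"
proof -
  assume k: "k \<in> Kq"
  have "Kq #>\<^bsub>TQ\<^esub> k = \<one>\<^bsub>QQ\<^esub>"
    using subgroup.rcos_const[OF Kq_sub subgroup.subgroup_is_group[OF Tq(1) gAQ] k]
    by (simp add: FactGroup_def)
  moreover have "Kp #>\<^bsub>TP\<^esub> \<one>\<^bsub>AP\<^esub> = \<one>\<^bsub>QP\<^esub>"
    using subgroup.rcos_const[OF Kp_sub subgroup.subgroup_is_group[OF Tp(1) gAP]] subgroup.one_closed[OF Kp(1)]
    by (simp add: FactGroup_def)
  ultimately show ?thesis using group_hom.hom_one[OF \<alpha>_hom] k Kq(2) Tp_one by (auto simp: Gam_def)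
qed

lemma Gam_surj1: "a \<in> Tp \<Longrightarrow> \<exists>b. (a, b) \<in> Gam"
proof -
  assume a: "a \<in> Tp"
  have "\<alpha> (Kp #>\<^bsub>TP\<^esub> a) \<in> carrier QQ" using group_hom.hom_closed[OF \<alpha>_hom cosP[OF a]] .
  then obtain b where "b \<in> Tq" "\<alpha> (Kp #>\<^bsub>TP\<^esub> a) = Kq #>\<^bsub>TQ\<^esub> b"
    by (auto simp: FactGroup_def RCOSETS_def)
  thus ?thesis using a by (auto simp: Gam_def)
qed

lemma Gam_surj2: "b \<in> Tq \<Longrightarrow> \<exists>a. (a, b) \<in> Gam"
proof -
  assume b: "b \<in> Tq"
  have "\<alpha> ` carrier QP = carrier QQ" using \<alpha>_iso by (simp add: iso_def bij_betw_def)
  hence "Kq #>\<^bsub>TQ\<^esub> b \<in> \<alpha> ` carrier QP" using cosQ[OF b] by simp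
  then obtain Y0 where Y0: "Y0 \<in> carrier QP" "\<alpha> Y0 = Kq #>\<^bsub>TQ\<^esub> b" by (auto elim!: imageE)
  then obtain a where "a \<in> Tp" "Y0 = Kp #>\<^bsub>TP\<^esub> a" by (auto simp: FactGroup_def RCOSETS_def)
  thus ?thesis using b Y0 by (auto simp: Gam_def)
qed

lemma Gam_sub: "Gam \<subseteq> Tp \<times> Tq" by (auto simp: Gam_def)

lemma compat': "(a, b) \<in> Gam \<Longrightarrow> fp ((inv\<^bsub>AP\<^esub> a) np) = fq (b nq)"
proof -
  assume g: "(a, b) \<in> Gam"
  hence t: "a \<in> Tp" "b \<in> Tq" by (auto simp: Gam_def)
  have e: "\<alpha> (Kp #>\<^bsub>TP\<^esub> a) = Kq #>\<^bsub>TQ\<^esub> b" using g by (auto simp: Gam_def)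
  have ia: "inv\<^bsub>AP\<^esub> a \<in> Tp" using Tp_inv[OF t(1)] .
  have "inv\<^bsub>TP\<^esub> (inv\<^bsub>AP\<^esub> a) = a"
    using inv_TP[OF ia] group.inv_inv[OF gAP] t(1) Tp_auto by (auto simp: carrier_AutoGroup)
  moreover have "a <#\<^bsub>TP\<^esub> Kp = Kp #>\<^bsub>TP\<^esub> a"
    using lcos_eq_rcos[OF cTP, of a Kp] t(1) Kp(2) by simp
  moreover have "b <#\<^bsub>TQ\<^esub> Kq = Kq #>\<^bsub>TQ\<^esub> b"
    using lcos_eq_rcos[OF cTQ, of b Kq] t(2) Kq(2) by simp
  ultimately have "b <#\<^bsub>TQ\<^esub> Kq = \<alpha> (inv\<^bsub>TP\<^esub> (inv\<^bsub>AP\<^esub> a) <#\<^bsub>TP\<^esub> Kp)" using e by simp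
  thus ?thesis using \<alpha>_compat ia t(2) by blast
qed

end


context ctx begin

lemma facts_p: "comm_group Np" "\<forall>x\<in>carrier Np. x [^]\<^bsub>Np\<^esub> p = \<one>\<^bsub>Np\<^esub>" "card (carrier Np) = p * p" "finite (carrier Np)"
  using Zpp_facts[OF primes(1) grp(1) Np_iso] by auto
lemma facts_q: "comm_group Nq" "\<forall>x\<in>carrier Nq. x [^]\<^bsub>Nq\<^esub> q = \<one>\<^bsub>Nq\<^esub>" "card (carrier Nq) = q * q" "finite (carrier Nq)"
  using Zpp_facts[OF primes(2) grp(2) Nq_iso] by auto

lemma TpA: "a \<in> Tp \<Longrightarrow> a \<in> auto Np" using Tp_auto by blast
lemma TqA: "b \<in> Tq \<Longrightarrow> b \<in> auto Nq" using Tq_auto by blast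
lemma TpC: "a \<in> Tp \<Longrightarrow> a \<in> carrier AP" using Tp_auto by (auto simp: carrier_AutoGroup)
lemma TqC: "b \<in> Tq \<Longrightarrow> b \<in> carrier AQ" using Tq_auto by (auto simp: carrier_AutoGroup)

lemma closP: "a \<in> Tp \<Longrightarrow> x \<in> carrier Np \<Longrightarrow> a x \<in> carrier Np" using auto_closed[OF TpA] .
lemma closQ: "b \<in> Tq \<Longrightarrow> y \<in> carrier Nq \<Longrightarrow> b y \<in> carrier Nq" using auto_closed[OF TqA] .
lemma appP: "a \<in> Tp \<Longrightarrow> c \<in> Tp \<Longrightarrow> x \<in> carrier Np \<Longrightarrow> (a \<otimes>\<^bsub>AP\<^esub> c) x = a (c x)"
  using mult_AutoGroup_apply[OF TpA TpA] .
lemma appQ: "a \<in> Tq \<Longrightarrow> c \<in> Tq \<Longrightarrow> x \<in> carrier Nq \<Longrightarrow> (a \<otimes>\<^bsub>AQ\<^esub> c) x = a (c x)"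
  using mult_AutoGroup_apply[OF TqA TqA] .
lemma invP1: "a \<in> Tp \<Longrightarrow> x \<in> carrier Np \<Longrightarrow> (inv\<^bsub>AP\<^esub> a) (a x) = x"
  using inv_AutoGroup_apply(3)[OF grp(1) TpA] .
lemma invP2: "a \<in> Tp \<Longrightarrow> x \<in> carrier Np \<Longrightarrow> a ((inv\<^bsub>AP\<^esub> a) x) = x"
  using inv_AutoGroup_apply(2)[OF grp(1) TpA] .
lemma invQ1: "a \<in> Tq \<Longrightarrow> x \<in> carrier Nq \<Longrightarrow> (inv\<^bsub>AQ\<^esub> a) (a x) = x"
  using inv_AutoGroup_apply(3)[OF grp(2) TqA] .
lemma invQ2: "a \<in> Tq \<Longrightarrow> x \<in> carrier Nq \<Longrightarrow> a ((inv\<^bsub>AQ\<^esub> a) x) = x"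
  using inv_AutoGroup_apply(2)[OF grp(2) TqA] .
lemma invinvP: "a \<in> Tp \<Longrightarrow> inv\<^bsub>AP\<^esub> (inv\<^bsub>AP\<^esub> a) = a"
  using group.inv_inv[OF gAP TpC] .
lemma invinvQ: "a \<in> Tq \<Longrightarrow> inv\<^bsub>AQ\<^esub> (inv\<^bsub>AQ\<^esub> a) = a"
  using group.inv_inv[OF gAQ TqC] .
lemma commP: "a \<in> Tp \<Longrightarrow> c \<in> Tp \<Longrightarrow> a \<otimes>\<^bsub>AP\<^esub> c = c \<otimes>\<^bsub>AP\<^esub> a" using Tp(2) by blast
lemma commQ: "a \<in> Tq \<Longrightarrow> c \<in> Tq \<Longrightarrow> a \<otimes>\<^bsub>AQ\<^esub> c = c \<otimes>\<^bsub>AQ\<^esub> a" using Tq(2) by blast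
lemma inv_multP: "a \<in> Tp \<Longrightarrow> c \<in> Tp \<Longrightarrow> inv\<^bsub>AP\<^esub> (a \<otimes>\<^bsub>AP\<^esub> c) = inv\<^bsub>AP\<^esub> a \<otimes>\<^bsub>AP\<^esub> inv\<^bsub>AP\<^esub> c"
  using group.inv_mult_group[OF gAP TpC TpC] commP Tp_inv by metis
lemma inv_multQ: "a \<in> Tq \<Longrightarrow> c \<in> Tq \<Longrightarrow> inv\<^bsub>AQ\<^esub> (a \<otimes>\<^bsub>AQ\<^esub> c) = inv\<^bsub>AQ\<^esub> a \<otimes>\<^bsub>AQ\<^esub> inv\<^bsub>AQ\<^esub> c"
  using group.inv_mult_group[OF gAQ TqC TqC] commQ Tq_inv by metis

lemma GamT: "(a, b) \<in> Gam \<Longrightarrow> a \<in> Tp \<and> b \<in> Tq" using Gam_sub by blast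

lemma INV_p:
  assumes g: "(a, b) \<in> Gam" and bn: "b nq = nq" and x: "x \<in> carrier Np"
  shows "fp (a x) = fp x"
proof -
  have t: "a \<in> Tp" "b \<in> Tq" using GamT[OF g] by auto
  have ax: "a x \<in> carrier Np" using closP[OF t(1) x] .
  show ?thesis
  proof (cases "x \<in> orbit_in (\<lambda>x a. a x) Tp np")
    case True
    then obtain c where c: "c \<in> Tp" "x = c np" unfolding orbit_in_def by auto
    obtain d where d: "(inv\<^bsub>AP\<^esub> c, d) \<in> Gam" using Gam_surj1[OF Tp_inv[OF c(1)]] by auto
    have dT: "d \<in> Tq" using GamT[OF d] by auto
    have "fp ((inv\<^bsub>AP\<^esub> (inv\<^bsub>AP\<^esub> c)) np) = fq (d nq)" using compat'[OF d] .
    hence e1: "fp x = fq (d nq)" using c invinvP by simp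
    have gm: "(inv\<^bsub>AP\<^esub> a \<otimes>\<^bsub>AP\<^esub> inv\<^bsub>AP\<^esub> c, inv\<^bsub>AQ\<^esub> b \<otimes>\<^bsub>AQ\<^esub> d) \<in> Gam"
      using Gam_mult[OF Gam_inv[OF g] d] .
    have e2: "fp ((inv\<^bsub>AP\<^esub> (inv\<^bsub>AP\<^esub> a \<otimes>\<^bsub>AP\<^esub> inv\<^bsub>AP\<^esub> c)) np) = fq ((inv\<^bsub>AQ\<^esub> b \<otimes>\<^bsub>AQ\<^esub> d) nq)"
      using compat'[OF gm] .
    have "inv\<^bsub>AP\<^esub> (inv\<^bsub>AP\<^esub> a \<otimes>\<^bsub>AP\<^esub> inv\<^bsub>AP\<^esub> c) = a \<otimes>\<^bsub>AP\<^esub> c"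
      using inv_multP[OF Tp_inv[OF t(1)] Tp_inv[OF c(1)]] invinvP t(1) c(1) by simp
    hence l: "(inv\<^bsub>AP\<^esub> (inv\<^bsub>AP\<^esub> a \<otimes>\<^bsub>AP\<^esub> inv\<^bsub>AP\<^esub> c)) np = a x"
      using appP[OF t(1) c(1) n(1)] c(2) by simp
    have ibn: "(inv\<^bsub>AQ\<^esub> b) nq = nq" using invQ1[OF t(2) n(2)] bn by simp
    have "(inv\<^bsub>AQ\<^esub> b \<otimes>\<^bsub>AQ\<^esub> d) nq = (d \<otimes>\<^bsub>AQ\<^esub> inv\<^bsub>AQ\<^esub> b) nq"
      using commQ[OF Tq_inv[OF t(2)] dT] by simp
    also have "\<dots> = d nq" using appQ[OF dT Tq_inv[OF t(2)] n(2)] ibn by simp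
    finally show ?thesis using e1 e2 l by simp
  next
    case False
    have "a x \<notin> orbit_in (\<lambda>x a. a x) Tp np"
    proof
      assume "a x \<in> orbit_in (\<lambda>x a. a x) Tp np"
      then obtain c where c: "c \<in> Tp" "a x = c np" unfolding orbit_in_def by auto
      have "x = (inv\<^bsub>AP\<^esub> a) (c np)" using invP1[OF t(1) x] c(2) by simp
      also have "\<dots> = (inv\<^bsub>AP\<^esub> a \<otimes>\<^bsub>AP\<^esub> c) np" using appP[OF Tp_inv[OF t(1)] c(1) n(1)] by simp
      finally have "x \<in> orbit_in (\<lambda>x a. a x) Tp np"
        unfolding orbit_in_def using Tp_mult[OF Tp_inv[OF t(1)] c(1)] by blast
      thus False using False by simp
    qed
    thus ?thesis using vanp ax x False by simp
  qed
qed

lemma INV_q: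
  assumes g: "(a, b) \<in> Gam" and an: "a np = np" and y: "y \<in> carrier Nq"
  shows "fq (b y) = fq y"
proof -
  have t: "a \<in> Tp" "b \<in> Tq" using GamT[OF g] by auto
  have by': "b y \<in> carrier Nq" using closQ[OF t(2) y] .
  show ?thesis
  proof (cases "y \<in> orbit_in (\<lambda>x a. a x) Tq nq")
    case True
    then obtain d where d: "d \<in> Tq" "y = d nq" unfolding orbit_in_def by auto
    obtain c where c: "(c, d) \<in> Gam" using Gam_surj2[OF d(1)] by auto
    have cT: "c \<in> Tp" using GamT[OF c] by auto
    have e1: "fp ((inv\<^bsub>AP\<^esub> c) np) = fq y" using compat'[OF c] d by simp
    have gm: "(a \<otimes>\<^bsub>AP\<^esub> c, b \<otimes>\<^bsub>AQ\<^esub> d) \<in> Gam" using Gam_mult[OF g c] .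
    have e2: "fp ((inv\<^bsub>AP\<^esub> (a \<otimes>\<^bsub>AP\<^esub> c)) np) = fq ((b \<otimes>\<^bsub>AQ\<^esub> d) nq)" using compat'[OF gm] .
    have ian: "(inv\<^bsub>AP\<^esub> a) np = np" using invP1[OF t(1) n(1)] an by simp
    have "(inv\<^bsub>AP\<^esub> (a \<otimes>\<^bsub>AP\<^esub> c)) np = (inv\<^bsub>AP\<^esub> c \<otimes>\<^bsub>AP\<^esub> inv\<^bsub>AP\<^esub> a) np"
      using inv_multP[OF t(1) cT] commP[OF Tp_inv[OF t(1)] Tp_inv[OF cT]] by simp
    also have "\<dots> = (inv\<^bsub>AP\<^esub> c) np" using appP[OF Tp_inv[OF cT] Tp_inv[OF t(1)] n(1)] ian by simp
    finally have l: "(inv\<^bsub>AP\<^esub> (a \<otimes>\<^bsub>AP\<^esub> c)) np = (inv\<^bsub>AP\<^esub> c) np" .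
    have r: "(b \<otimes>\<^bsub>AQ\<^esub> d) nq = b y" using appQ[OF t(2) d(1) n(2)] d(2) by simp
    show ?thesis using e1 e2 l r by simp
  next
    case False
    have "b y \<notin> orbit_in (\<lambda>x a. a x) Tq nq"
    proof
      assume "b y \<in> orbit_in (\<lambda>x a. a x) Tq nq"
      then obtain c where c: "c \<in> Tq" "b y = c nq" unfolding orbit_in_def by auto
      have "y = (inv\<^bsub>AQ\<^esub> b) (c nq)" using invQ1[OF t(2) y] c(2) by simp
      also have "\<dots> = (inv\<^bsub>AQ\<^esub> b \<otimes>\<^bsub>AQ\<^esub> c) nq" using appQ[OF Tq_inv[OF t(2)] c(1) n(2)] by simp
      finally have "y \<in> orbit_in (\<lambda>x a. a x) Tq nq"
        unfolding orbit_in_def using Tq_mult[OF Tq_inv[OF t(2)] c(1)] by blast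
      thus False using False by simp
    qed
    thus ?thesis using vanq by' y False by simp
  qed
qed

end


context ctx begin

abbreviation "W \<equiv> (AP \<times>\<times> AQ)\<lparr>carrier := Gam\<rparr>"
abbreviation "phi \<equiv> (\<lambda>(\<sigma>::('a \<Rightarrow> 'a) \<times> ('b \<Rightarrow> 'b)) x. (fst \<sigma> (fst x), snd \<sigma> (snd x)))"
abbreviation "NN \<equiv> Np \<times>\<times> Nq"
abbreviation "GG \<equiv> sdprod NN W phi"
abbreviation "actP \<equiv> (\<lambda>x g. fst (conj_sd GG W (x, \<one>\<^bsub>Nq\<^esub>) g))"
abbreviation "actQ \<equiv> (\<lambda>y g. snd (conj_sd GG W (\<one>\<^bsub>Np\<^esub>, y) g))"

lemma gPQ: "group (AP \<times>\<times> AQ)" using DirProd_group[OF gAP gAQ] .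

lemma inv_PQ: "(a, b) \<in> Gam \<Longrightarrow> inv\<^bsub>AP \<times>\<times> AQ\<^esub> (a, b) = (inv\<^bsub>AP\<^esub> a, inv\<^bsub>AQ\<^esub> b)"
  using inv_DirProd[OF gAP gAQ] GamT TpC TqC by blast

lemma Gam_subgroup: "subgroup Gam (AP \<times>\<times> AQ)"
proof (rule group.subgroupI[OF gPQ])
  show "Gam \<subseteq> carrier (AP \<times>\<times> AQ)" using GamT TpC TqC by auto
  show "Gam \<noteq> {}" using Gam_one by blast
  fix a assume "a \<in> Gam"
  thus "inv\<^bsub>AP \<times>\<times> AQ\<^esub> a \<in> Gam" using inv_PQ Gam_inv by (cases a) auto
next
  fix a b assume "a \<in> Gam" "b \<in> Gam"
  thus "a \<otimes>\<^bsub>AP \<times>\<times> AQ\<^esub> b \<in> Gam" using Gam_mult by (cases a, cases b) auto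
qed

lemma gW: "group W" using subgroup.subgroup_is_group[OF Gam_subgroup gPQ] .

lemma inv_W: "(a, b) \<in> Gam \<Longrightarrow> inv\<^bsub>W\<^esub> (a, b) = (inv\<^bsub>AP\<^esub> a, inv\<^bsub>AQ\<^esub> b)"
  using group.m_inv_consistent[OF gPQ Gam_subgroup] inv_PQ by simp

lemma gNN: "group NN" using DirProd_group[OF grp] .
lemma cNN: "comm_group NN"
proof -
  interpret P: comm_group Np by (rule facts_p(1))
  interpret Q: comm_group Nq by (rule facts_q(1))
  show ?thesis by (rule group.group_comm_groupI[OF gNN]) (auto simp: P.m_comm Q.m_comm)
qed

lemma sdc: "sd_ctx NN W phi"
proof (intro sd_ctx.intro)
  show "group NN" by (rule gNN)
  show "group W" by (rule gW)
next
  fix s x assume "s \<in> carrier W" "x \<in> carrier NN"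
  thus "phi s x \<in> carrier NN" using GamT closP closQ by (cases s, cases x) auto
next
  fix s x y assume s: "s \<in> carrier W" and x: "x \<in> carrier NN" and y: "y \<in> carrier NN"
  obtain a b where ab: "s = (a, b)" by (cases s)
  have t: "a \<in> auto Np" "b \<in> auto Nq" using s ab GamT TpA TqA by auto
  have ha: "a \<in> hom Np Np" "b \<in> hom Nq Nq" using t by (auto simp: auto_def)
  show "phi s (x \<otimes>\<^bsub>NN\<^esub> y) = phi s x \<otimes>\<^bsub>NN\<^esub> phi s y"
    using x y ha by (cases x, cases y) (auto simp: ab hom_mult)
next
  fix s t x assume s: "s \<in> carrier W" and t: "t \<in> carrier W" and x: "x \<in> carrier NN"
  obtain a b where ab: "s = (a, b)" by (cases s)
  obtain a' b' where ab': "t = (a', b')" by (cases t)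
  have tt: "a \<in> Tp" "b \<in> Tq" "a' \<in> Tp" "b' \<in> Tq" using s t ab ab' GamT by auto
  show "phi (s \<otimes>\<^bsub>W\<^esub> t) x = phi s (phi t x)"
    using x appP[OF tt(1) tt(3)] appQ[OF tt(2) tt(4)] by (cases x) (auto simp: ab ab')
next
  fix x assume "x \<in> carrier NN"
  thus "phi \<one>\<^bsub>W\<^esub> x = x" by (cases x) (auto simp: one_AutoGroup)
qed

lemma gGG: "group GG" using sd_ctx.sd_group[OF sdc] .

lemma carrier_GG: "carrier GG = carrier NN \<times> Gam" by (simp add: sdprod_carrier)

lemma finGG: "finite (carrier GG)"
proof -
  have "Tp \<times> Tq \<subseteq> auto Np \<times> auto Nq" using Tp_auto Tq_auto by blast
  hence "Gam \<subseteq> auto Np \<times> auto Nq" using Gam_sub by blast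
  hence "finite Gam" using finite_auto[OF facts_p(4)] finite_auto[OF facts_q(4)] finite_subset by blast
  thus ?thesis using facts_p(4) facts_q(4) by (simp add: carrier_GG)
qed

lemma GG_elem: "g \<in> carrier GG \<Longrightarrow> (fst (snd g), snd (snd g)) \<in> Gam"
  by (auto simp: carrier_GG)

lemma actP_formula: "g \<in> carrier GG \<Longrightarrow> x \<in> carrier Np \<Longrightarrow> actP x g = (inv\<^bsub>AP\<^esub> (fst (snd g))) x"
proof -
  assume g: "g \<in> carrier GG" and x: "x \<in> carrier Np"
  have "(x, \<one>\<^bsub>Nq\<^esub>) \<in> carrier NN" using x grp(2) by (simp add: group.is_monoid monoid.one_closed)
  hence "conj_sd GG W (x, \<one>\<^bsub>Nq\<^esub>) g = phi (inv\<^bsub>W\<^esub> (snd g)) (x, \<one>\<^bsub>Nq\<^esub>)"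
    using sd_ctx.sd_conj[OF sdc cNN _ g] by blast
  moreover have "inv\<^bsub>W\<^esub> (snd g) = (inv\<^bsub>AP\<^esub> (fst (snd g)), inv\<^bsub>AQ\<^esub> (snd (snd g)))"
    using inv_W[OF GG_elem[OF g]] by simp
  ultimately show ?thesis by simp
qed

lemma actQ_formula: "g \<in> carrier GG \<Longrightarrow> y \<in> carrier Nq \<Longrightarrow> actQ y g = (inv\<^bsub>AQ\<^esub> (snd (snd g))) y"
proof -
  assume g: "g \<in> carrier GG" and y: "y \<in> carrier Nq"
  have "(\<one>\<^bsub>Np\<^esub>, y) \<in> carrier NN" using y grp(1) by (simp add: group.is_monoid monoid.one_closed)
  hence "conj_sd GG W (\<one>\<^bsub>Np\<^esub>, y) g = phi (inv\<^bsub>W\<^esub> (snd g)) (\<one>\<^bsub>Np\<^esub>, y)"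
    using sd_ctx.sd_conj[OF sdc cNN _ g] by blast
  moreover have "inv\<^bsub>W\<^esub> (snd g) = (inv\<^bsub>AP\<^esub> (fst (snd g)), inv\<^bsub>AQ\<^esub> (snd (snd g)))"
    using inv_W[OF GG_elem[OF g]] by simp
  ultimately show ?thesis by simp
qed

lemma GG_mult_snd: "g \<in> carrier GG \<Longrightarrow> h \<in> carrier GG \<Longrightarrow>
   fst (snd (g \<otimes>\<^bsub>GG\<^esub> h)) = fst (snd g) \<otimes>\<^bsub>AP\<^esub> fst (snd h) \<and>
   snd (snd (g \<otimes>\<^bsub>GG\<^esub> h)) = snd (snd g) \<otimes>\<^bsub>AQ\<^esub> snd (snd h)"
  by (cases g, cases h) (simp add: sdprod_mult mult_DirProd')

lemma GG_inv_snd: "g \<in> carrier GG \<Longrightarrow>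
   fst (snd (inv\<^bsub>GG\<^esub> g)) = inv\<^bsub>AP\<^esub> (fst (snd g)) \<and>
   snd (snd (inv\<^bsub>GG\<^esub> g)) = inv\<^bsub>AQ\<^esub> (snd (snd g))"
proof -
  assume g: "g \<in> carrier GG"
  obtain m s where gs: "g = (m, s)" by (cases g)
  have c: "m \<in> carrier NN" "s \<in> carrier W" using g gs by (auto simp: carrier_GG)
  have "inv\<^bsub>GG\<^esub> g = (phi (inv\<^bsub>W\<^esub> s) (inv\<^bsub>NN\<^esub> m), inv\<^bsub>W\<^esub> s)"
    using sd_ctx.sd_inv[OF sdc c] gs by simp
  thus ?thesis using inv_W[of "fst s" "snd s"] c gs by simp
qed

lemma actP_mult: "g \<in> carrier GG \<Longrightarrow> h \<in> carrier GG \<Longrightarrow> x \<in> carrier Np \<Longrightarrow>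
    actP x (g \<otimes>\<^bsub>GG\<^esub> h) = actP (actP x h) g"
proof -
  assume g: "g \<in> carrier GG" and h: "h \<in> carrier GG" and x: "x \<in> carrier Np"
  have gh: "g \<otimes>\<^bsub>GG\<^esub> h \<in> carrier GG" using group.subgroupI gGG g h by (simp add: group.is_monoid monoid.m_closed)
  have ta: "fst (snd g) \<in> Tp" "fst (snd h) \<in> Tp" using GamT[OF GG_elem[OF g]] GamT[OF GG_elem[OF h]] by auto
  have "actP x (g \<otimes>\<^bsub>GG\<^esub> h) = (inv\<^bsub>AP\<^esub> (fst (snd g) \<otimes>\<^bsub>AP\<^esub> fst (snd h))) x"
    using actP_formula[OF gh x] GG_mult_snd[OF g h] by simp
  also have "\<dots> = (inv\<^bsub>AP\<^esub> (fst (snd g))) ((inv\<^bsub>AP\<^esub> (fst (snd h))) x)"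
    using inv_multP[OF ta] appP[OF Tp_inv[OF ta(1)] Tp_inv[OF ta(2)] x] by simp
  also have "\<dots> = actP (actP x h) g"
    using actP_formula[OF h x] actP_formula[OF g closP[OF Tp_inv[OF ta(2)] x]] by simp
  finally show ?thesis .
qed

lemma actQ_mult: "g \<in> carrier GG \<Longrightarrow> h \<in> carrier GG \<Longrightarrow> y \<in> carrier Nq \<Longrightarrow>
    actQ y (g \<otimes>\<^bsub>GG\<^esub> h) = actQ (actQ y h) g"
proof -
  assume g: "g \<in> carrier GG" and h: "h \<in> carrier GG" and x: "y \<in> carrier Nq"
  have gh: "g \<otimes>\<^bsub>GG\<^esub> h \<in> carrier GG" using gGG g h by (simp add: group.is_monoid monoid.m_closed)
  have ta: "snd (snd g) \<in> Tq" "snd (snd h) \<in> Tq" using GamT[OF GG_elem[OF g]] GamT[OF GG_elem[OF h]] by auto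
  have "actQ y (g \<otimes>\<^bsub>GG\<^esub> h) = (inv\<^bsub>AQ\<^esub> (snd (snd g) \<otimes>\<^bsub>AQ\<^esub> snd (snd h))) y"
    using actQ_formula[OF gh x] GG_mult_snd[OF g h] by simp
  also have "\<dots> = (inv\<^bsub>AQ\<^esub> (snd (snd g))) ((inv\<^bsub>AQ\<^esub> (snd (snd h))) y)"
    using inv_multQ[OF ta] appQ[OF Tq_inv[OF ta(1)] Tq_inv[OF ta(2)] x] by simp
  also have "\<dots> = actQ (actQ y h) g"
    using actQ_formula[OF h x] actQ_formula[OF g closQ[OF Tq_inv[OF ta(2)] x]] by simp
  finally show ?thesis .
qed

end


context ctx begin

abbreviation "HP \<equiv> stab_in actQ (carrier GG) nq"
abbreviation "HQ \<equiv> stab_in actP (carrier GG) np"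

lemma one_GG: "\<one>\<^bsub>GG\<^esub> = (\<one>\<^bsub>NN\<^esub>, (\<one>\<^bsub>AP\<^esub>, \<one>\<^bsub>AQ\<^esub>))"
  by (simp add: sdprod_one)

lemma one_NN_c: "\<one>\<^bsub>NN\<^esub> \<in> carrier NN" using monoid.one_closed[OF group.is_monoid[OF gNN]] .

lemma mkG: "(a, b) \<in> Gam \<Longrightarrow> (\<one>\<^bsub>NN\<^esub>, (a, b)) \<in> carrier GG"
  using one_NN_c by (simp add: carrier_GG)

lemma actP_mk: "(a, b) \<in> Gam \<Longrightarrow> x \<in> carrier Np \<Longrightarrow> actP x (\<one>\<^bsub>NN\<^esub>, (a, b)) = (inv\<^bsub>AP\<^esub> a) x"
  using actP_formula[OF mkG] by simp
lemma actQ_mk: "(a, b) \<in> Gam \<Longrightarrow> y \<in> carrier Nq \<Longrightarrow> actQ y (\<one>\<^bsub>NN\<^esub>, (a, b)) = (inv\<^bsub>AQ\<^esub> b) y"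
  using actQ_formula[OF mkG] by simp

lemma one_AP_app: "x \<in> carrier Np \<Longrightarrow> \<one>\<^bsub>AP\<^esub> x = x" by (simp add: one_AutoGroup)
lemma one_AQ_app: "x \<in> carrier Nq \<Longrightarrow> \<one>\<^bsub>AQ\<^esub> x = x" by (simp add: one_AutoGroup)
lemma inv_one_AP: "inv\<^bsub>AP\<^esub> \<one>\<^bsub>AP\<^esub> = \<one>\<^bsub>AP\<^esub>" using monoid.inv_one[OF group.is_monoid[OF gAP]] .
lemma inv_one_AQ: "inv\<^bsub>AQ\<^esub> \<one>\<^bsub>AQ\<^esub> = \<one>\<^bsub>AQ\<^esub>" using monoid.inv_one[OF group.is_monoid[OF gAQ]] .

lemma GT: "g \<in> carrier GG \<Longrightarrow> fst (snd g) \<in> Tp \<and> snd (snd g) \<in> Tq"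
  using GamT[OF GG_elem] by blast

lemma actQ_inv: "g \<in> carrier GG \<Longrightarrow> y \<in> carrier Nq \<Longrightarrow> actQ y (inv\<^bsub>GG\<^esub> g) = (snd (snd g)) y"
proof -
  assume g: "g \<in> carrier GG" and y: "y \<in> carrier Nq"
  have ig: "inv\<^bsub>GG\<^esub> g \<in> carrier GG" using group.inv_closed[OF gGG g] .
  show ?thesis using actQ_formula[OF ig y] GG_inv_snd[OF g] invinvQ GT[OF g] by simp
qed
lemma actP_inv: "g \<in> carrier GG \<Longrightarrow> x \<in> carrier Np \<Longrightarrow> actP x (inv\<^bsub>GG\<^esub> g) = (fst (snd g)) x"
proof -
  assume g: "g \<in> carrier GG" and y: "x \<in> carrier Np"
  have ig: "inv\<^bsub>GG\<^esub> g \<in> carrier GG" using group.inv_closed[OF gGG g] .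
  show ?thesis using actP_formula[OF ig y] GG_inv_snd[OF g] invinvP GT[OF g] by simp
qed

lemma HP_sub: "subgroup HP GG"
proof (rule group.subgroupI[OF gGG])
  show "HP \<subseteq> carrier GG" by (auto simp: stab_in_def)
  have "actQ nq \<one>\<^bsub>GG\<^esub> = nq"
    using actQ_mk[OF Gam_one n(2)] one_GG inv_one_AQ one_AQ_app[OF n(2)] by simp
  thus "HP \<noteq> {}" using group.is_monoid[OF gGG] monoid.one_closed unfolding stab_in_def by blast
next
  fix g assume "g \<in> HP"
  hence g: "g \<in> carrier GG" "actQ nq g = nq" by (auto simp: stab_in_def)
  have b: "snd (snd g) \<in> Tq" using GT[OF g(1)] by blast
  have "(inv\<^bsub>AQ\<^esub> (snd (snd g))) nq = nq" using g actQ_formula[OF g(1) n(2)] by simp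
  hence "snd (snd g) nq = nq" using invQ2[OF b n(2)] by metis
  thus "inv\<^bsub>GG\<^esub> g \<in> HP" using actQ_inv[OF g(1) n(2)] group.inv_closed[OF gGG g(1)]
    unfolding stab_in_def by simp
next
  fix g h assume "g \<in> HP" "h \<in> HP"
  hence g: "g \<in> carrier GG" "actQ nq g = nq" "h \<in> carrier GG" "actQ nq h = nq" by (auto simp: stab_in_def)
  thus "g \<otimes>\<^bsub>GG\<^esub> h \<in> HP" using actQ_mult[OF g(1) g(3) n(2)] gGG
    unfolding stab_in_def by (simp add: group.is_monoid monoid.m_closed)
qed

lemma HQ_sub: "subgroup HQ GG"
proof (rule group.subgroupI[OF gGG])
  show "HQ \<subseteq> carrier GG" by (auto simp: stab_in_def)
  have "actP np \<one>\<^bsub>GG\<^esub> = np"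
    using actP_mk[OF Gam_one n(1)] one_GG inv_one_AP one_AP_app[OF n(1)] by simp
  thus "HQ \<noteq> {}" using group.is_monoid[OF gGG] monoid.one_closed unfolding stab_in_def by blast
next
  fix g assume "g \<in> HQ"
  hence g: "g \<in> carrier GG" "actP np g = np" by (auto simp: stab_in_def)
  have b: "fst (snd g) \<in> Tp" using GT[OF g(1)] by blast
  have "(inv\<^bsub>AP\<^esub> (fst (snd g))) np = np" using g actP_formula[OF g(1) n(1)] by simp
  hence "fst (snd g) np = np" using invP2[OF b n(1)] by metis
  thus "inv\<^bsub>GG\<^esub> g \<in> HQ" using actP_inv[OF g(1) n(1)] group.inv_closed[OF gGG g(1)]
    unfolding stab_in_def by simp
next
  fix g h assume "g \<in> HQ" "h \<in> HQ"
  hence g: "g \<in> carrier GG" "actP np g = np" "h \<in> carrier GG" "actP np h = np" by (auto simp: stab_in_def)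
  thus "g \<otimes>\<^bsub>GG\<^esub> h \<in> HQ" using actP_mult[OF g(1) g(3) n(1)] gGG
    unfolding stab_in_def by (simp add: group.is_monoid monoid.m_closed)
qed

lemma surjP: "t \<in> Tp \<Longrightarrow> \<exists>g\<in>carrier GG. \<forall>x\<in>carrier Np. actP x g = t x"
proof -
  assume t: "t \<in> Tp"
  obtain b where b: "(inv\<^bsub>AP\<^esub> t, b) \<in> Gam" using Gam_surj1[OF Tp_inv[OF t]] by auto
  show ?thesis
  proof (rule bexI[OF _ mkG[OF b]])
    show "\<forall>x\<in>carrier Np. actP x (\<one>\<^bsub>NN\<^esub>, inv\<^bsub>AP\<^esub> t, b) = t x"
      using actP_mk[OF b] invinvP[OF t] by simp
  qed
qed

lemma surjQ: "t \<in> Tq \<Longrightarrow> \<exists>g\<in>carrier GG. \<forall>x\<in>carrier Nq. actQ x g = t x"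
proof -
  assume t: "t \<in> Tq"
  obtain a where b: "(a, inv\<^bsub>AQ\<^esub> t) \<in> Gam" using Gam_surj2[OF Tq_inv[OF t]] by auto
  show ?thesis
  proof (rule bexI[OF _ mkG[OF b]])
    show "\<forall>x\<in>carrier Nq. actQ x (\<one>\<^bsub>NN\<^esub>, a, inv\<^bsub>AQ\<^esub> t) = t x"
      using actQ_mk[OF b] invinvQ[OF t] by simp
  qed
qed

lemma E_p: "in_E GG actP HP Np fp"
proof (rule abstract_E[OF grp(1) primes(1) facts_p(2) facts_p(3) Tp Kp fpE n(1) vanp gGG finGG HP_sub])
  show "\<forall>g\<in>carrier GG. \<exists>t\<in>Tp. \<forall>x\<in>carrier Np. actP x g = t x"
  proof
    fix g assume g: "g \<in> carrier GG"
    show "\<exists>t\<in>Tp. \<forall>x\<in>carrier Np. actP x g = t x"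
      by (rule bexI[OF _ Tp_inv[OF conjunct1[OF GT[OF g]]]]) (simp add: actP_formula[OF g])
  qed
  show "\<forall>t\<in>Tp. \<exists>g\<in>carrier GG. \<forall>x\<in>carrier Np. actP x g = t x" using surjP by blast
  show "\<forall>k\<in>Kp. \<exists>h\<in>HP. \<forall>x\<in>carrier Np. actP x h = k x"
  proof
    fix k assume k: "k \<in> Kp"
    have ik: "inv\<^bsub>AP\<^esub> k \<in> Kp" using subgroup.m_inv_closed[OF Kp(1) k] .
    have g: "(inv\<^bsub>AP\<^esub> k, \<one>\<^bsub>AQ\<^esub>) \<in> Gam" using Gam_K1[OF ik] .
    have kT: "k \<in> Tp" using k Kp(2) by blast
    have "actQ nq (\<one>\<^bsub>NN\<^esub>, (inv\<^bsub>AP\<^esub> k, \<one>\<^bsub>AQ\<^esub>)) = nq"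
      using actQ_mk[OF g n(2)] inv_one_AQ one_AQ_app[OF n(2)] by simp
    hence "(\<one>\<^bsub>NN\<^esub>, (inv\<^bsub>AP\<^esub> k, \<one>\<^bsub>AQ\<^esub>)) \<in> HP" using mkG[OF g] unfolding stab_in_def by simp
    moreover have "\<forall>x\<in>carrier Np. actP x (\<one>\<^bsub>NN\<^esub>, (inv\<^bsub>AP\<^esub> k, \<one>\<^bsub>AQ\<^esub>)) = k x"
      using actP_mk[OF g] invinvP[OF kT] by simp
    ultimately show "\<exists>h\<in>HP. \<forall>x\<in>carrier Np. actP x h = k x" by blast
  qed
  show "\<forall>g\<in>carrier GG. \<forall>h\<in>carrier GG. \<forall>x\<in>carrier Np. actP x (g \<otimes>\<^bsub>GG\<^esub> h) = actP (actP x h) g"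
    using actP_mult by simp
  show "\<forall>x\<in>carrier Np. \<forall>h\<in>HP. fp (actP x h) = fp x"
  proof (intro ballI)
    fix x h assume x: "x \<in> carrier Np" and h: "h \<in> HP"
    hence hc: "h \<in> carrier GG" "actQ nq h = nq" by (auto simp: stab_in_def)
    have el: "(fst (snd h), snd (snd h)) \<in> Gam" using GG_elem[OF hc(1)] .
    have "(inv\<^bsub>AQ\<^esub> (snd (snd h))) nq = nq" using hc actQ_formula[OF hc(1) n(2)] by simp
    thus "fp (actP x h) = fp x"
      using INV_p[OF Gam_inv[OF el] _ x] actP_formula[OF hc(1) x] by simp
  qed
qed

lemma E_q: "in_E GG actQ HQ Nq fq"
proof (rule abstract_E[OF grp(2) primes(2) facts_q(2) facts_q(3) Tq Kq fqE n(2) vanq gGG finGG HQ_sub])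
  show "\<forall>g\<in>carrier GG. \<exists>t\<in>Tq. \<forall>x\<in>carrier Nq. actQ x g = t x"
  proof
    fix g assume g: "g \<in> carrier GG"
    show "\<exists>t\<in>Tq. \<forall>x\<in>carrier Nq. actQ x g = t x"
      by (rule bexI[OF _ Tq_inv[OF conjunct2[OF GT[OF g]]]]) (simp add: actQ_formula[OF g])
  qed
  show "\<forall>t\<in>Tq. \<exists>g\<in>carrier GG. \<forall>x\<in>carrier Nq. actQ x g = t x" using surjQ by blast
  show "\<forall>k\<in>Kq. \<exists>h\<in>HQ. \<forall>x\<in>carrier Nq. actQ x h = k x"
  proof
    fix k assume k: "k \<in> Kq"
    have ik: "inv\<^bsub>AQ\<^esub> k \<in> Kq" using subgroup.m_inv_closed[OF Kq(1) k] .
    have g: "(\<one>\<^bsub>AP\<^esub>, inv\<^bsub>AQ\<^esub> k) \<in> Gam" using Gam_K2[OF ik] .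
    have kT: "k \<in> Tq" using k Kq(2) by blast
    have "actP np (\<one>\<^bsub>NN\<^esub>, (\<one>\<^bsub>AP\<^esub>, inv\<^bsub>AQ\<^esub> k)) = np"
      using actP_mk[OF g n(1)] inv_one_AP one_AP_app[OF n(1)] by simp
    hence "(\<one>\<^bsub>NN\<^esub>, (\<one>\<^bsub>AP\<^esub>, inv\<^bsub>AQ\<^esub> k)) \<in> HQ" using mkG[OF g] unfolding stab_in_def by simp
    moreover have "\<forall>x\<in>carrier Nq. actQ x (\<one>\<^bsub>NN\<^esub>, (\<one>\<^bsub>AP\<^esub>, inv\<^bsub>AQ\<^esub> k)) = k x"
      using actQ_mk[OF g] invinvQ[OF kT] by simp
    ultimately show "\<exists>h\<in>HQ. \<forall>x\<in>carrier Nq. actQ x h = k x" by blast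
  qed
  show "\<forall>g\<in>carrier GG. \<forall>h\<in>carrier GG. \<forall>x\<in>carrier Nq. actQ x (g \<otimes>\<^bsub>GG\<^esub> h) = actQ (actQ x h) g"
    using actQ_mult by simp
  show "\<forall>x\<in>carrier Nq. \<forall>h\<in>HQ. fq (actQ x h) = fq x"
  proof (intro ballI)
    fix x h assume x: "x \<in> carrier Nq" and h: "h \<in> HQ"
    hence hc: "h \<in> carrier GG" "actP np h = np" by (auto simp: stab_in_def)
    have el: "(fst (snd h), snd (snd h)) \<in> Gam" using GG_elem[OF hc(1)] .
    have "(inv\<^bsub>AP\<^esub> (fst (snd h))) np = np" using hc actP_formula[OF hc(1) n(1)] by simp
    thus "fq (actQ x h) = fq x"
      using INV_q[OF Gam_inv[OF el] _ x] actQ_formula[OF hc(1) x] by simp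
  qed
qed

end


context ctx begin

lemma orbP: "orbit_in actP (carrier GG) np = orbit_in (\<lambda>x a. a x) Tp np"
proof
  show "orbit_in actP (carrier GG) np \<subseteq> orbit_in (\<lambda>x a. a x) Tp np"
  proof
    fix z assume "z \<in> orbit_in actP (carrier GG) np"
    then obtain g where g: "g \<in> carrier GG" "z = actP np g" unfolding orbit_in_def by blast
    have "z = (inv\<^bsub>AP\<^esub> (fst (snd g))) np" using g actP_formula[OF g(1) n(1)] by simp
    moreover have "inv\<^bsub>AP\<^esub> (fst (snd g)) \<in> Tp" using Tp_inv GT[OF g(1)] by blast
    ultimately show "z \<in> orbit_in (\<lambda>x a. a x) Tp np" unfolding orbit_in_def by blast
  qed
  show "orbit_in (\<lambda>x a. a x) Tp np \<subseteq> orbit_in actP (carrier GG) np"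
  proof
    fix z assume "z \<in> orbit_in (\<lambda>x a. a x) Tp np"
    then obtain t where t: "t \<in> Tp" "z = t np" unfolding orbit_in_def by blast
    obtain g where g: "g \<in> carrier GG" "\<forall>x\<in>carrier Np. actP x g = t x" using surjP[OF t(1)] by blast
    have "z = actP np g" using g(2) n(1) t(2) by simp
    thus "z \<in> orbit_in actP (carrier GG) np" unfolding orbit_in_def using g(1) by blast
  qed
qed

lemma orbQ: "orbit_in actQ (carrier GG) nq = orbit_in (\<lambda>x a. a x) Tq nq"
proof
  show "orbit_in actQ (carrier GG) nq \<subseteq> orbit_in (\<lambda>x a. a x) Tq nq"
  proof
    fix z assume "z \<in> orbit_in actQ (carrier GG) nq"
    then obtain g where g: "g \<in> carrier GG" "z = actQ nq g" unfolding orbit_in_def by blast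
    have "z = (inv\<^bsub>AQ\<^esub> (snd (snd g))) nq" using g actQ_formula[OF g(1) n(2)] by simp
    moreover have "inv\<^bsub>AQ\<^esub> (snd (snd g)) \<in> Tq" using Tq_inv GT[OF g(1)] by blast
    ultimately show "z \<in> orbit_in (\<lambda>x a. a x) Tq nq" unfolding orbit_in_def by blast
  qed
  show "orbit_in (\<lambda>x a. a x) Tq nq \<subseteq> orbit_in actQ (carrier GG) nq"
  proof
    fix z assume "z \<in> orbit_in (\<lambda>x a. a x) Tq nq"
    then obtain t where t: "t \<in> Tq" "z = t nq" unfolding orbit_in_def by blast
    obtain g where g: "g \<in> carrier GG" "\<forall>x\<in>carrier Nq. actQ x g = t x" using surjQ[OF t(1)] by blast
    have "z = actQ nq g" using g(2) n(2) t(2) by simp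
    thus "z \<in> orbit_in actQ (carrier GG) nq" unfolding orbit_in_def using g(1) by blast
  qed
qed

lemma conj1:
  assumes x: "x \<in> carrier NN" and g: "g \<in> carrier GG" and g': "g' \<in> carrier GG"
    and e: "nq = actQ (snd x) g" "nq = actQ (snd x) g'"
  shows "fp (actP (fst x) g) = fp (actP (fst x) g')"
proof -
  have x1: "fst x \<in> carrier Np" and y: "snd x \<in> carrier Nq" using x by auto
  define a where "a = fst (snd g)"
  define b where "b = snd (snd g)"
  define a' where "a' = fst (snd g')"
  define b' where "b' = snd (snd g')"
  have el: "(a, b) \<in> Gam" "(a', b') \<in> Gam" using GG_elem[OF g] GG_elem[OF g'] a_def b_def a'_def b'_def by auto
  have t: "a \<in> Tp" "b \<in> Tq" "a' \<in> Tp" "b' \<in> Tq" using GamT el by auto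
  have e1: "(inv\<^bsub>AQ\<^esub> b) (snd x) = nq" using e(1) actQ_formula[OF g y] b_def by simp
  have e2: "(inv\<^bsub>AQ\<^esub> b') (snd x) = nq" using e(2) actQ_formula[OF g' y] b'_def by simp
  have bn: "b nq = snd x" using invQ2[OF t(2) y] e1 by simp
  have sg: "(inv\<^bsub>AP\<^esub> a' \<otimes>\<^bsub>AP\<^esub> a, inv\<^bsub>AQ\<^esub> b' \<otimes>\<^bsub>AQ\<^esub> b) \<in> Gam"
    using Gam_mult[OF Gam_inv[OF el(2)] el(1)] .
  have "(inv\<^bsub>AQ\<^esub> b' \<otimes>\<^bsub>AQ\<^esub> b) nq = nq"
    using appQ[OF Tq_inv[OF t(4)] t(2) n(2)] bn e2 by simp
  have z: "(inv\<^bsub>AP\<^esub> a) (fst x) \<in> carrier Np" using closP[OF Tp_inv[OF t(1)] x1] .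
  have "fp ((inv\<^bsub>AP\<^esub> a' \<otimes>\<^bsub>AP\<^esub> a) ((inv\<^bsub>AP\<^esub> a) (fst x))) = fp ((inv\<^bsub>AP\<^esub> a) (fst x))"
    using INV_p[OF sg \<open>(inv\<^bsub>AQ\<^esub> b' \<otimes>\<^bsub>AQ\<^esub> b) nq = nq\<close> z] .
  moreover have "(inv\<^bsub>AP\<^esub> a' \<otimes>\<^bsub>AP\<^esub> a) ((inv\<^bsub>AP\<^esub> a) (fst x)) = (inv\<^bsub>AP\<^esub> a') (fst x)"
    using appP[OF Tp_inv[OF t(3)] t(1) z] invP2[OF t(1) x1] by simp
  ultimately show ?thesis using actP_formula[OF g x1] actP_formula[OF g' x1] a_def a'_def by simp
qed

lemma exist_g0:
  assumes y: "y \<in> carrier Nq" and yo: "y \<in> orbit_in actQ (carrier GG) nq"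
  shows "\<exists>g. g \<in> carrier GG \<and> nq = actQ y g"
proof -
  obtain g1 where g1: "g1 \<in> carrier GG" "y = actQ nq g1" using yo unfolding orbit_in_def by blast
  have b: "snd (snd g1) \<in> Tq" using GT[OF g1(1)] by blast
  have "y = (inv\<^bsub>AQ\<^esub> (snd (snd g1))) nq" using g1 actQ_formula[OF g1(1) n(2)] by simp
  hence "actQ y (inv\<^bsub>GG\<^esub> g1) = nq" using actQ_inv[OF g1(1) y] invQ2[OF b n(2)] by simp
  thus ?thesis using group.inv_closed[OF gGG g1(1)] by (intro exI[of _ "inv\<^bsub>GG\<^esub> g1"]) simp
qed

abbreviation "eps \<equiv> (\<lambda>x. if snd x \<notin> orbit_in actQ (carrier GG) nq then 0
                 else fp (actP (fst x) (SOME g. g \<in> carrier GG \<and> nq = actQ (snd x) g)))"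

lemma conj4a:
  assumes x: "x \<in> carrier NN" and nx: "fst x \<notin> orbit_in actP (carrier GG) np"
  shows "eps x = 0"
proof (cases "snd x \<in> orbit_in actQ (carrier GG) nq")
  case True
  have x1: "fst x \<in> carrier Np" and y: "snd x \<in> carrier Nq" using x by auto
  define g0 where "g0 = (SOME g. g \<in> carrier GG \<and> nq = actQ (snd x) g)"
  have g0: "g0 \<in> carrier GG \<and> nq = actQ (snd x) g0"
    unfolding g0_def by (rule someI_ex[OF exist_g0[OF y True]])
  define a0 where "a0 = fst (snd g0)"
  have a0: "a0 \<in> Tp" using GT[OF conjunct1[OF g0]] a0_def by blast
  have z: "actP (fst x) g0 = (inv\<^bsub>AP\<^esub> a0) (fst x)" using actP_formula[OF conjunct1[OF g0] x1] a0_def by simp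
  have zc: "(inv\<^bsub>AP\<^esub> a0) (fst x) \<in> carrier Np" using closP[OF Tp_inv[OF a0] x1] .
  have "(inv\<^bsub>AP\<^esub> a0) (fst x) \<notin> orbit_in (\<lambda>x a. a x) Tp np"
  proof
    assume "(inv\<^bsub>AP\<^esub> a0) (fst x) \<in> orbit_in (\<lambda>x a. a x) Tp np"
    then obtain c where c: "c \<in> Tp" "(inv\<^bsub>AP\<^esub> a0) (fst x) = c np" unfolding orbit_in_def by blast
    have "fst x = a0 (c np)" using invP2[OF a0 x1] c(2) by metis
    also have "\<dots> = (a0 \<otimes>\<^bsub>AP\<^esub> c) np" using appP[OF a0 c(1) n(1)] by simp
    finally have "fst x \<in> orbit_in (\<lambda>x a. a x) Tp np"
      unfolding orbit_in_def using Tp_mult[OF a0 c(1)] by blast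
    thus False using nx orbP by simp
  qed
  hence "fp ((inv\<^bsub>AP\<^esub> a0) (fst x)) = 0" using vanp zc by blast
  moreover have "eps x = fp (actP (fst x) g0)" using True unfolding g0_def by simp
  ultimately show ?thesis using z by simp
qed simp

lemma conj4b:
  assumes x: "x \<in> carrier NN" and g: "g \<in> carrier GG" and e: "np = actP (fst x) g"
  shows "eps x = fq (actQ (snd x) g)"
proof -
  have x1: "fst x \<in> carrier Np" and y: "snd x \<in> carrier Nq" using x by auto
  define a where "a = fst (snd g)"
  define b where "b = snd (snd g)"
  have el: "(a, b) \<in> Gam" using GG_elem[OF g] a_def b_def by auto
  have t: "a \<in> Tp" "b \<in> Tq" using GamT el by auto
  have e1: "(inv\<^bsub>AP\<^esub> a) (fst x) = np" using e actP_formula[OF g x1] a_def by simp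
  have xa: "fst x = a np" using invP2[OF t(1) x1] e1 by simp
  have aq: "actQ (snd x) g = (inv\<^bsub>AQ\<^esub> b) (snd x)" using actQ_formula[OF g y] b_def by simp
  show ?thesis
  proof (cases "snd x \<in> orbit_in actQ (carrier GG) nq")
    case False
    have "(inv\<^bsub>AQ\<^esub> b) (snd x) \<notin> orbit_in (\<lambda>x a. a x) Tq nq"
    proof
      assume "(inv\<^bsub>AQ\<^esub> b) (snd x) \<in> orbit_in (\<lambda>x a. a x) Tq nq"
      then obtain d where d: "d \<in> Tq" "(inv\<^bsub>AQ\<^esub> b) (snd x) = d nq" unfolding orbit_in_def by blast
      have "snd x = b (d nq)" using invQ2[OF t(2) y] d(2) by metis
      also have "\<dots> = (b \<otimes>\<^bsub>AQ\<^esub> d) nq" using appQ[OF t(2) d(1) n(2)] by simp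
      finally have "snd x \<in> orbit_in (\<lambda>x a. a x) Tq nq"
        unfolding orbit_in_def using Tq_mult[OF t(2) d(1)] by blast
      thus False using False orbQ by simp
    qed
    hence "fq ((inv\<^bsub>AQ\<^esub> b) (snd x)) = 0" using vanq closQ[OF Tq_inv[OF t(2)] y] by blast
    thus ?thesis using False aq by simp
  next
    case True
    define g0 where "g0 = (SOME g. g \<in> carrier GG \<and> nq = actQ (snd x) g)"
    have g0: "g0 \<in> carrier GG \<and> nq = actQ (snd x) g0"
      unfolding g0_def by (rule someI_ex[OF exist_g0[OF y True]])
    define a0 where "a0 = fst (snd g0)"
    define b0 where "b0 = snd (snd g0)"
    have el0: "(a0, b0) \<in> Gam" using GG_elem[OF conjunct1[OF g0]] a0_def b0_def by simp
    have t0: "a0 \<in> Tp" "b0 \<in> Tq" using GamT el0 by auto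
    have "nq = (inv\<^bsub>AQ\<^esub> b0) (snd x)" using conjunct2[OF g0] actQ_formula[OF conjunct1[OF g0] y] b0_def by simp
    hence yb: "snd x = b0 nq" using invQ2[OF t0(2) y] by metis
    have "eps x = fp (actP (fst x) g0)" using True unfolding g0_def by simp
    also have "\<dots> = fp ((inv\<^bsub>AP\<^esub> a0) (fst x))" using actP_formula[OF conjunct1[OF g0] x1] a0_def by simp
    finally have ep: "eps x = fp ((inv\<^bsub>AP\<^esub> a0) (fst x))" .
    have sg: "(inv\<^bsub>AP\<^esub> a \<otimes>\<^bsub>AP\<^esub> a0, inv\<^bsub>AQ\<^esub> b \<otimes>\<^bsub>AQ\<^esub> b0) \<in> Gam"
      using Gam_mult[OF Gam_inv[OF el] el0] .
    have c: "fp ((inv\<^bsub>AP\<^esub> (inv\<^bsub>AP\<^esub> a \<otimes>\<^bsub>AP\<^esub> a0)) np) = fq ((inv\<^bsub>AQ\<^esub> b \<otimes>\<^bsub>AQ\<^esub> b0) nq)"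
      using compat'[OF sg] .
    have "inv\<^bsub>AP\<^esub> (inv\<^bsub>AP\<^esub> a \<otimes>\<^bsub>AP\<^esub> a0) = inv\<^bsub>AP\<^esub> a0 \<otimes>\<^bsub>AP\<^esub> a"
      using inv_multP[OF Tp_inv[OF t(1)] t0(1)] invinvP[OF t(1)] commP[OF t(1) Tp_inv[OF t0(1)]] by simp
    hence l: "(inv\<^bsub>AP\<^esub> (inv\<^bsub>AP\<^esub> a \<otimes>\<^bsub>AP\<^esub> a0)) np = (inv\<^bsub>AP\<^esub> a0) (fst x)"
      using appP[OF Tp_inv[OF t0(1)] t(1) n(1)] xa by simp
    have r: "(inv\<^bsub>AQ\<^esub> b \<otimes>\<^bsub>AQ\<^esub> b0) nq = (inv\<^bsub>AQ\<^esub> b) (snd x)"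
      using appQ[OF Tq_inv[OF t(2)] t0(2) n(2)] yb by simp
    show ?thesis using ep c l r aq by simp
  qed
qed

lemma main:
  "(\<forall>x \<in> carrier NN. \<forall>g \<in> carrier GG. \<forall>g' \<in> carrier GG.
            nq = actQ (snd x) g \<and> nq = actQ (snd x) g' \<longrightarrow> fp (actP (fst x) g) = fp (actP (fst x) g'))
       \<and> in_E GG actP (stab_in actQ (carrier GG) nq) Np fp
       \<and> in_E GG actQ (stab_in actP (carrier GG) np) Nq fq
       \<and> (\<forall>x \<in> carrier NN. (fst x \<notin> orbit_in actP (carrier GG) np \<longrightarrow> eps x = 0)
            \<and> (\<forall>g \<in> carrier GG. np = actP (fst x) g \<longrightarrow> eps x = fq (actQ (snd x) g)))"
  using conj1 E_p E_q conj4a conj4b by blast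

end


theorem mainTheorem12:
  fixes p q :: nat
    and Np :: "'a monoid" and Nq :: "'b monoid"
    and Tp Kp :: "('a \<Rightarrow> 'a) set" and Tq Kq :: "('b \<Rightarrow> 'b) set"
    and fp :: "'a \<Rightarrow> int" and fq :: "'b \<Rightarrow> int"
    and np :: 'a and nq :: 'b
    and \<alpha> :: "('a \<Rightarrow> 'a) set \<Rightarrow> ('b \<Rightarrow> 'b) set"
    and \<Gamma> :: "(('a \<Rightarrow> 'a) \<times> ('b \<Rightarrow> 'b)) set"
    and N :: "('a \<times> 'b) monoid"
    and G :: "(('a \<times> 'b) \<times> (('a \<Rightarrow> 'a) \<times> ('b \<Rightarrow> 'b))) monoid"
    and actp :: "'a \<Rightarrow> ('a \<times> 'b) \<times> (('a \<Rightarrow> 'a) \<times> ('b \<Rightarrow> 'b)) \<Rightarrow> 'a"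
    and actq :: "'b \<Rightarrow> ('a \<times> 'b) \<times> (('a \<Rightarrow> 'a) \<times> ('b \<Rightarrow> 'b)) \<Rightarrow> 'b"
    and \<epsilon> :: "'a \<times> 'b \<Rightarrow> int"
  assumes primes: "Factorial_Ring.prime p" "Factorial_Ring.prime q" "p \<noteq> q"
    and grp: "group Np" "group Nq"
    and Np_iso: "Np \<cong> integer_mod_group p \<times>\<times> integer_mod_group p"
    and Nq_iso: "Nq \<cong> integer_mod_group q \<times>\<times> integer_mod_group q"
    and Tp: "subgroup Tp (AutoGroup Np)" "\<forall>a\<in>Tp. \<forall>b\<in>Tp. a \<otimes>\<^bsub>AutoGroup Np\<^esub> b = b \<otimes>\<^bsub>AutoGroup Np\<^esub> a"
    and Tq: "subgroup Tq (AutoGroup Nq)" "\<forall>a\<in>Tq. \<forall>b\<in>Tq. a \<otimes>\<^bsub>AutoGroup Nq\<^esub> b = b \<otimes>\<^bsub>AutoGroup Nq\<^esub> a"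
    and Kp: "subgroup Kp (AutoGroup Np)" "Kp \<subseteq> Tp"
    and Kq: "subgroup Kq (AutoGroup Nq)" "Kq \<subseteq> Tq"
    and fpE: "in_E (AutoGroup Np) (\<lambda>x a. a x) Kp Np fp"
    and fqE: "in_E (AutoGroup Nq) (\<lambda>x a. a x) Kq Nq fq"
    and n: "np \<in> carrier Np" "nq \<in> carrier Nq" "fp np = fq nq" "fp np \<noteq> 0"
    and vanp: "\<forall>x \<in> carrier Np. x \<notin> orbit_in (\<lambda>x a. a x) Tp np \<longrightarrow> fp x = 0"
    and vanq: "\<forall>y \<in> carrier Nq. y \<notin> orbit_in (\<lambda>y b. b y) Tq nq \<longrightarrow> fq y = 0"
    and \<alpha>_iso: "\<alpha> \<in> iso ((AutoGroup Np)\<lparr>carrier := Tp\<rparr> Mod Kp) ((AutoGroup Nq)\<lparr>carrier := Tq\<rparr> Mod Kq)"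
    and \<alpha>_compat: "\<forall>a \<in> Tp. \<forall>b \<in> Tq.
        b <#\<^bsub>(AutoGroup Nq)\<lparr>carrier := Tq\<rparr>\<^esub> Kq
          = \<alpha> (inv\<^bsub>(AutoGroup Np)\<lparr>carrier := Tp\<rparr>\<^esub> a <#\<^bsub>(AutoGroup Np)\<lparr>carrier := Tp\<rparr>\<^esub> Kp)
        \<longrightarrow> fp (a np) = fq (b nq)"
  defines "\<Gamma> \<equiv> {\<sigma> \<in> Tp \<times> Tq.
        \<alpha> (Kp #>\<^bsub>(AutoGroup Np)\<lparr>carrier := Tp\<rparr>\<^esub> fst \<sigma>) = Kq #>\<^bsub>(AutoGroup Nq)\<lparr>carrier := Tq\<rparr>\<^esub> snd \<sigma>}"
    and "N \<equiv> Np \<times>\<times> Nq"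
    and "G \<equiv> sdprod N ((AutoGroup Np \<times>\<times> AutoGroup Nq)\<lparr>carrier := \<Gamma>\<rparr>)
                 (\<lambda>\<sigma> x. (fst \<sigma> (fst x), snd \<sigma> (snd x)))"
    and "actp \<equiv> (\<lambda>x g. fst (conj_sd G ((AutoGroup Np \<times>\<times> AutoGroup Nq)\<lparr>carrier := \<Gamma>\<rparr>) (x, \<one>\<^bsub>Nq\<^esub>) g))"
    and "actq \<equiv> (\<lambda>y g. snd (conj_sd G ((AutoGroup Np \<times>\<times> AutoGroup Nq)\<lparr>carrier := \<Gamma>\<rparr>) (\<one>\<^bsub>Np\<^esub>, y) g))"
    and "\<epsilon> \<equiv> (\<lambda>x. if snd x \<notin> orbit_in actq (carrier G) nq then 0
                 else fp (actp (fst x) (SOME g. g \<in> carrier G \<and> nq = actq (snd x) g)))"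
  shows "(\<forall>x \<in> carrier N. \<forall>g \<in> carrier G. \<forall>g' \<in> carrier G.
            nq = actq (snd x) g \<and> nq = actq (snd x) g' \<longrightarrow> fp (actp (fst x) g) = fp (actp (fst x) g'))
       \<and> in_E G actp (stab_in actq (carrier G) nq) Np fp
       \<and> in_E G actq (stab_in actp (carrier G) np) Nq fq
       \<and> (\<forall>x \<in> carrier N. (fst x \<notin> orbit_in actp (carrier G) np \<longrightarrow> \<epsilon> x = 0)
            \<and> (\<forall>g \<in> carrier G. np = actp (fst x) g \<longrightarrow> \<epsilon> x = fq (actq (snd x) g)))"
proof -
  have I: "ctx p q Np Nq Tp Kp Tq Kq fp fq np nq \<alpha>"
    unfolding ctx_def using assms(1-25) by blast
  have G1: "\<Gamma> = ctx.Gam Np Nq Tp Kp Tq Kq \<alpha>" using assms(26) ctx.Gam_def[OF I] by simp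
  show ?thesis unfolding assms(27-31) G1 by (rule ctx.main[OF I])
qed

end
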